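(* Let $G=C^m_n$ with $2(m+1)\leq n$, and let $\mathcal R=\{G_i:i\in [n]\}$ be a family of graphs. Then $$\gamma_{gr}(G\hookleftarrow \mathcal R)= \max_{I \in \mathcal I_2} \left\{\sum_{i\in I} \gamma_{gr} (G_i)- |I|(m+1)\right\} + n.$$ Moreover, given a Grundy dominating sequence $S_i$ of $G_i$ for all $i\in [n]$, and $I^*\in \mathcal I_2$ such that $$\sum_{i\in I^*} \gamma_{gr} (G_i)- |I^*|(m+1)=\max_{I \in \mathcal I_2} \left\{\sum_{i\in I} \gamma_{gr} (G_i)- |I|(m+1)\right\},$$ the sequence $S$ obtained from $S_C(I^* )$ by replacing each $i\in I^*$ by the sequence $S_i$ is a Grundy dominating sequence of $G\hookleftarrow \mathcal R$.
   Context: $C_n^m$ is the $m$-th power of the cycle $C_n$, with vertex set $[n]=\{1,\dots,n\}$ (addition modulo $n$), where $i,j$ are adjacent iff their distance in $C_n$ is at most $m$. Given a graph $G$ and a family $\mathcal R=\{G_v: v\in V(G)\}$, $G\hookleftarrow \mathcal R$ (the $X$-join product) is the graph obtained by replacing each vertex $v$ of $G$ by $G_v$ (every vertex of $G_v$ is adjacent to every vertex of $G_u$ whenever $uv\in E(G)$). For a sequence $S=(v_1,\dots,v_k)$ of distinct vertices, $PN_S(v_i)=N[v_i]\setminus\bigcup_{j<i}N[v_j]$; $S$ is a legal dominating sequence if its vertex set is dominating and every $PN_S(v_i)\neq\emptyset$. A Grundy dominating sequence is a legal dominating sequence of maximum length, and $\gamma_{gr}(G)$ is that length. $\mathcal I_2$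 denotes the family of independent sets of $C_n^m$ with at least two vertices. For $1\le i\le j\le n$, $S(i,j)=(i,i+1,\dots,j)$ and $S^{-1}$ denotes a sequence reversed; $\oplus$ is concatenation. For $I=\{i^1<i^2<\dots<i^p\}\in\mathcal I_2$, let $S_j=S(i^j,i^{j+1}-(m+1))$ for $j\in[p-1]$, let $S_p$ be the reverse of the sequence $i^p+(m+1),\dots,i^1-1$ (indices mod $n$) if $i^p+(m+1)\neq i^1$ and the empty sequence otherwise, and $S_C(I)=S_1\oplus\cdots\oplus S_{p-1}\oplus S_p\oplus(i^p)$; this is a legal dominating sequence of $C_n^m$ of length $n-|I|m$. *)

theory Defs
  imports Main
begin

record 'a sgraph =
  verts :: "'a set"
  adj   :: "'a \<Rightarrow> 'a \<Rightarrow> bool"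

definition graph :: "'a sgraph \<Rightarrow> bool" where
  "graph G \<longleftrightarrow> finite (verts G) \<and> verts G \<noteq> {}
     \<and> (\<forall>u v. adj G u v \<longrightarrow> u \<in> verts G \<and> v \<in> verts G)
     \<and> (\<forall>u v. adj G u v \<longrightarrow> adj G v u)
     \<and> (\<forall>v. \<not> adj G v v)"

definition cnbhd :: "'a sgraph \<Rightarrow> 'a \<Rightarrow> 'a set" where
  "cnbhd G v = {v} \<union> {u \<in> verts G. adj G v u}"

definition dominating :: "'a sgraph \<Rightarrow> 'a set \<Rightarrow> bool" where
  "dominating G D \<longleftrightarrow> D \<subseteq> verts G \<and> (\<forall>v \<in> verts G. \<exists>u \<in> D. v \<in> cnbhd G u)"

text \<open>Private neighbourhood PN_S(v_i) of the i-th entry (0-based) of a sequence S.\<close>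
definition pn :: "'a sgraph \<Rightarrow> 'a list \<Rightarrow> nat \<Rightarrow> 'a set" where
  "pn G S i = cnbhd G (S ! i) - (\<Union>j<i. cnbhd G (S ! j))"

definition legal_dom_seq :: "'a sgraph \<Rightarrow> 'a list \<Rightarrow> bool" where
  "legal_dom_seq G S \<longleftrightarrow> distinct S \<and> set S \<subseteq> verts G \<and> dominating G (set S)
     \<and> (\<forall>i < length S. pn G S i \<noteq> {})"

definition grundy_dom_seq :: "'a sgraph \<Rightarrow> 'a list \<Rightarrow> bool" where
  "grundy_dom_seq G S \<longleftrightarrow> legal_dom_seq G S
     \<and> (\<forall>T. legal_dom_seq G T \<longrightarrow> length T \<le> length S)"

definition gamma_gr :: "'a sgraph \<Rightarrow> nat" where
  "gamma_gr G = Max {length S | S. legal_dom_seq G S}"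

definition cyc_dist :: "nat \<Rightarrow> nat \<Rightarrow> nat \<Rightarrow> nat" where
  "cyc_dist n i j = (let d = (if i \<le> j then j - i else i - j) in min d (n - d))"

definition cycle_pow :: "nat \<Rightarrow> nat \<Rightarrow> nat sgraph" where
  "cycle_pow n m = \<lparr> verts = {1..n},
     adj = (\<lambda>i j. i \<in> {1..n} \<and> j \<in> {1..n} \<and> i \<noteq> j \<and> cyc_dist n i j \<le> m) \<rparr>"

definition xjoin :: "'v sgraph \<Rightarrow> ('v \<Rightarrow> 'a sgraph) \<Rightarrow> ('v \<times> 'a) sgraph" where
  "xjoin G R = \<lparr> verts = {(v, x). v \<in> verts G \<and> x \<in> verts (R v)},
     adj = (\<lambda>(v, x) (u, y). v \<in> verts G \<and> x \<in> verts (R v) \<and> u \<in> verts G \<and> y \<in> verts (R u)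
              \<and> ((v = u \<and> adj (R v) x y) \<or> (v \<noteq> u \<and> adj G v u))) \<rparr>"

definition indep_set :: "'a sgraph \<Rightarrow> 'a set \<Rightarrow> bool" where
  "indep_set G I \<longleftrightarrow> I \<subseteq> verts G \<and> (\<forall>u \<in> I. \<forall>v \<in> I. \<not> adj G u v)"

definition I2 :: "nat \<Rightarrow> nat \<Rightarrow> nat set set" where
  "I2 n m = {I. indep_set (cycle_pow n m) I \<and> 2 \<le> card I}"

text \<open>With I = {i^1 < ... < i^p} (list is), S_j = S(i^j, i^{j+1}-(m+1)) = [i^j ..< i^{j+1}-m];
  S_p is the reverse of the cyclic run i^p+(m+1), ..., i^1-1 (indices mod n, on {1..n}),
  which has L = n - i^p + i^1 - (m+1) elements (L = 0 exactly when i^p+(m+1) = i^1 mod n);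
  its k-th element (k = 0..L-1) is ((i^p + m + k) mod n) + 1.\<close>
definition S_C :: "nat \<Rightarrow> nat \<Rightarrow> nat set \<Rightarrow> nat list" where
  "S_C n m I = (let is = sorted_list_of_set I; i1 = hd is; ip = last is;
       L = n + i1 - ip - (m + 1) in
     concat (map (\<lambda>(a, b). [a ..< b - m]) (zip is (tl is)))
     @ rev (map (\<lambda>k. (ip + m + k) mod n + 1) [0 ..< L])
     @ [ip])"

definition expand_seq :: "nat set \<Rightarrow> (nat \<Rightarrow> 'a list) \<Rightarrow> (nat \<Rightarrow> 'a) \<Rightarrow> nat list \<Rightarrow> (nat \<times> 'a) list" where
  "expand_seq I seqs c S = concat (map (\<lambda>j. if j \<in> I then map (Pair j) (seqs j) else [(j, c j)]) S)"

end

theory Submission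
  imports Defs
begin


definition off :: "nat \<Rightarrow> nat \<Rightarrow> nat \<Rightarrow> nat" where
  "off n x y = (if x \<le> y then y - x else y + n - x)"

lemma cyc_dist_off: "x \<in> {1..n} \<Longrightarrow> y \<in> {1..n} \<Longrightarrow> cyc_dist n x y \<le> m \<longleftrightarrow> (off n x y \<le> m \<or> off n y x \<le> m)"
  unfolding cyc_dist_def off_def Let_def min_def by (auto split: if_splits)

lemma adjC_iff:
  "adj (cycle_pow n m) x y \<longleftrightarrow> x \<in> {1..n} \<and> y \<in> {1..n} \<and> x \<noteq> y \<and> (off n x y \<le> m \<or> off n y x \<le> m)"
proof -
  have "adj (cycle_pow n m) x y \<longleftrightarrow> x \<in> {1..n} \<and> y \<in> {1..n} \<and> x \<noteq> y \<and> cyc_dist n x y \<le> m"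
    unfolding cycle_pow_def by simp
  then show ?thesis using cyc_dist_off by blast
qed

lemma vertsC[simp]: "verts (cycle_pow n m) = {1..n}"
  unfolding cycle_pow_def by simp

lemma adjC_sym: "adj (cycle_pow n m) x y \<longleftrightarrow> adj (cycle_pow n m) y x"
  unfolding adjC_iff by auto

lemma adjC_irrefl[simp]: "\<not> adj (cycle_pow n m) x x"
  unfolding adjC_iff by auto

lemma off_lt: "x \<in> {1..n} \<Longrightarrow> y \<in> {1..n} \<Longrightarrow> off n x y < n"
  unfolding off_def by (auto split: if_splits)

lemma off_self[simp]: "off n x x = 0"
  unfolding off_def by auto

lemma off_0_iff: "x \<in> {1..n} \<Longrightarrow> y \<in> {1..n} \<Longrightarrow> off n x y = 0 \<longleftrightarrow> x = y"
  unfolding off_def by (auto split: if_splits)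

lemma off_swap: "x \<in> {1..n} \<Longrightarrow> y \<in> {1..n} \<Longrightarrow> x \<noteq> y \<Longrightarrow> off n x y + off n y x = n"
  unfolding off_def by (auto split: if_splits)

lemma off_trans: "x \<in> {1..n} \<Longrightarrow> y \<in> {1..n} \<Longrightarrow> e \<in> {1..n} \<Longrightarrow>
   off n x y = (if off n e x \<le> off n e y then off n e y - off n e x else n + off n e y - off n e x)"
  unfolding off_def by (auto split: if_splits)

lemma off_inj: "x \<in> {1..n} \<Longrightarrow> y \<in> {1..n} \<Longrightarrow> e \<in> {1..n} \<Longrightarrow> off n e x = off n e y \<Longrightarrow> x = y"
  unfolding off_def by (auto split: if_splits)

definition pt :: "nat \<Rightarrow> nat \<Rightarrow> nat \<Rightarrow> nat" where
  "pt n e d = (if e + d \<le> n then e + d else e + d - n)"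

lemma pt_in: "e \<in> {1..n} \<Longrightarrow> d < n \<Longrightarrow> pt n e d \<in> {1..n}"
  unfolding pt_def by auto

lemma off_pt: "e \<in> {1..n} \<Longrightarrow> d < n \<Longrightarrow> off n e (pt n e d) = d"
  unfolding pt_def off_def by auto

lemma pt_off: "e \<in> {1..n} \<Longrightarrow> x \<in> {1..n} \<Longrightarrow> pt n e (off n e x) = x"
  unfolding pt_def off_def by (auto split: if_splits)


definition legalp :: "'a sgraph \<Rightarrow> 'a list \<Rightarrow> bool" where
  "legalp G T \<longleftrightarrow> distinct T \<and> set T \<subseteq> verts G \<and> (\<forall>i < length T. pn G T i \<noteq> {})"

lemma legal_dom_seq_iff: "legal_dom_seq G T \<longleftrightarrow> legalp G T \<and> dominating G (set T)"
  unfolding legal_dom_seq_def legalp_def by auto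

lemma UN_less_length: "(\<Union>j<length T. f (T ! j)) = \<Union>(f ` set T)"
  by (force simp: in_set_conv_nth)

lemma pn_snoc_last: "pn G (T @ [x]) (length T) = cnbhd G x - \<Union>(cnbhd G ` set T)"
proof -
  have "(\<Union>j<length T. cnbhd G ((T @ [x]) ! j)) = (\<Union>j<length T. cnbhd G (T ! j))"
    by (auto simp: nth_append)
  then show ?thesis unfolding pn_def using UN_less_length[of "cnbhd G" T] by simp
qed

lemma pn_snoc: "i < length T \<Longrightarrow> pn G (T @ [x]) i = pn G T i"
  unfolding pn_def by (auto simp: nth_append)

lemma legalp_Nil[simp]: "legalp G []"
  unfolding legalp_def by auto

lemma legalp_snoc:
  "legalp G (T @ [x]) \<longleftrightarrow> legalp G T \<and> x \<notin> set T \<and> x \<in> verts G \<and> cnbhd G x - \<Union>(cnbhd G ` set T) \<noteq> {}"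
proof -
  have "(\<forall>i < length (T @ [x]). pn G (T @ [x]) i \<noteq> {}) \<longleftrightarrow>
        (\<forall>i < length T. pn G T i \<noteq> {}) \<and> cnbhd G x - \<Union>(cnbhd G ` set T) \<noteq> {}"
    using pn_snoc[of _ T G x] pn_snoc_last[of G T x] by (auto simp: less_Suc_eq)
  then show ?thesis unfolding legalp_def by auto
qed

lemma cnbhd_self: "v \<in> cnbhd G v"
  unfolding cnbhd_def by auto

lemma cnbhd_sub: "v \<in> verts G \<Longrightarrow> cnbhd G v \<subseteq> verts G"
  unfolding cnbhd_def by auto

lemma dominating_iff: "set T \<subseteq> verts G \<Longrightarrow> dominating G (set T) \<longleftrightarrow> verts G \<subseteq> \<Union>(cnbhd G ` set T)"
  unfolding dominating_def by auto

lemma legalp_extend: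
  assumes "finite (verts G)" "legalp G T"
  shows "\<exists>T'. legal_dom_seq G T' \<and> length T \<le> length T'"
  using assms(2)
proof (induction "card (verts G - \<Union>(cnbhd G ` set T))" arbitrary: T rule: less_induct)
  case less
  show ?case
  proof (cases "verts G \<subseteq> \<Union>(cnbhd G ` set T)")
    case True
    then show ?thesis using less.prems dominating_iff[of T G]
      unfolding legal_dom_seq_iff legalp_def by auto
  next
    case False
    then obtain v where v: "v \<in> verts G" "v \<notin> \<Union>(cnbhd G ` set T)" by auto
    have vT: "v \<notin> set T" using v(2) cnbhd_self[of v G] by auto
    have L: "legalp G (T @ [v])" unfolding legalp_snoc using less.prems v vT cnbhd_self[of v G] by auto
    have sub: "\<Union>(cnbhd G ` set T) \<inter> verts G \<subseteq> \<Union>(cnbhd G ` set (T@[v])) \<inter> verts G" by auto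
    have "card (verts G - \<Union>(cnbhd G ` set (T@[v]))) < card (verts G - \<Union>(cnbhd G ` set T))"
      apply (rule psubset_card_mono)
      using assms(1) apply simp
      using v cnbhd_self[of v G] by auto
    from less.hyps[OF this L] obtain T' where "legal_dom_seq G T'" "length (T @ [v]) \<le> length T'" by blast
    then show ?thesis by auto
  qed
qed

lemma lengths_finite:
  assumes "finite (verts G)"
  shows "finite {length S | S. legal_dom_seq G S}"
proof -
  have "{length S | S. legal_dom_seq G S} \<subseteq> {..card (verts G)}"
  proof
    fix k assume "k \<in> {length S | S. legal_dom_seq G S}"
    then obtain S where S: "legal_dom_seq G S" "k = length S" by auto
    then have "card (set S) \<le> card (verts G)" using assms card_mono unfolding legal_dom_seq_def by blast
    then show "k \<in> {..card (verts G)}" using S distinct_card unfolding legal_dom_seq_def by fastforce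
  qed
  then show ?thesis using finite_subset by blast
qed

lemma gamma_ge: "finite (verts G) \<Longrightarrow> legal_dom_seq G S \<Longrightarrow> length S \<le> gamma_gr G"
  unfolding gamma_gr_def using lengths_finite by (intro Max_ge) auto

lemma legalp_le_gamma: "finite (verts G) \<Longrightarrow> legalp G T \<Longrightarrow> length T \<le> gamma_gr G"
  using legalp_extend gamma_ge le_trans by metis

lemma gamma_attained:
  assumes "finite (verts G)"
  shows "\<exists>S. legal_dom_seq G S \<and> length S = gamma_gr G"
proof -
  obtain T where "legal_dom_seq G T" using legalp_extend[OF assms legalp_Nil] by blast
  then have ne: "{length S | S. legal_dom_seq G S} \<noteq> {}" by auto
  have "gamma_gr G \<in> {length S | S. legal_dom_seq G S}"
    unfolding gamma_gr_def using Max_in[OF lengths_finite[OF assms] ne] .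
  then show ?thesis by auto
qed

lemma grundy_length: "finite (verts G) \<Longrightarrow> grundy_dom_seq G S \<Longrightarrow> length S = gamma_gr G"
  unfolding grundy_dom_seq_def using gamma_ge gamma_attained by (metis le_antisym)

lemma card_le_gamma:
  fixes P :: "nat set" and f :: "nat \<Rightarrow> 'a"
  assumes fin: "finite (verts G)" and P: "finite P"
    and f: "\<forall>t\<in>P. f t \<in> verts G" "inj_on f P"
    and priv: "\<forall>t\<in>P. \<exists>y \<in> cnbhd G (f t). \<forall>t'\<in>P. t' < t \<longrightarrow> y \<notin> cnbhd G (f t')"
  shows "card P \<le> gamma_gr G"
proof -
  define l where "l = sorted_list_of_set P"
  have sl: "sorted_wrt (<) l" "set l = P" "distinct l" "length l = card P"
    unfolding l_def using P by auto
  define T where "T = map f l"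
  have "legalp G T"
    unfolding legalp_def
  proof (intro conjI allI impI)
    show "distinct T" unfolding T_def using sl f(2) by (simp add: distinct_map)
    show "set T \<subseteq> verts G" unfolding T_def using sl f(1) by auto
    fix i assume i: "i < length T"
    then have li: "l ! i \<in> P" using sl unfolding T_def by auto
    obtain y where y: "y \<in> cnbhd G (f (l ! i))" "\<forall>t'\<in>P. t' < l ! i \<longrightarrow> y \<notin> cnbhd G (f t')"
      using priv li by blast
    have "y \<in> pn G T i"
      unfolding pn_def
    proof
      show "y \<in> cnbhd G (T ! i)" using y i unfolding T_def by auto
      show "y \<notin> (\<Union>j<i. cnbhd G (T ! j))"
      proof
        assume "y \<in> (\<Union>j<i. cnbhd G (T ! j))"
        then obtain j where j: "j < i" "y \<in> cnbhd G (T ! j)" by auto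
        have "l ! j < l ! i" using sorted_wrt_nth_less[OF sl(1) j(1)] i unfolding T_def by auto
        moreover have "l ! j \<in> P" using j i sl unfolding T_def by auto
        moreover have "T ! j = f (l ! j)" using j i unfolding T_def by auto
        ultimately show False using y j by auto
      qed
    qed
    then show "pn G T i \<noteq> {}" by auto
  qed
  from legalp_le_gamma[OF fin this] show ?thesis unfolding T_def using sl by simp
qed


lemma verts_xjoin: "(v, x) \<in> verts (xjoin G R) \<longleftrightarrow> v \<in> verts G \<and> x \<in> verts (R v)"
  unfolding xjoin_def by auto

lemma cnbhd_xjoin:
  assumes "(v, x) \<in> verts (xjoin G R)"
  shows "(u, y) \<in> cnbhd (xjoin G R) (v, x) \<longleftrightarrow>
     ((u = v \<and> y \<in> cnbhd (R v) x) \<or> (u \<noteq> v \<and> adj G v u \<and> u \<in> verts G \<and> y \<in> verts (R u)))"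
  using assms unfolding cnbhd_def xjoin_def by auto

lemma legalp_append:
  assumes "legalp G T" "distinct U" "set U \<subseteq> verts G" "set T \<inter> set U = {}"
    "\<forall>i<length U. pn G U i - \<Union>(cnbhd G ` set T) \<noteq> {}"
  shows "legalp G (T @ U)"
  unfolding legalp_def
proof (intro conjI allI impI)
  show "distinct (T @ U)" using assms(1,2,4) unfolding legalp_def by auto
  show "set (T @ U) \<subseteq> verts G" using assms(1,3) unfolding legalp_def by auto
  fix i assume i: "i < length (T @ U)"
  show "pn G (T @ U) i \<noteq> {}"
  proof (cases "i < length T")
    case True
    then have "pn G (T @ U) i = pn G T i" unfolding pn_def by (auto simp: nth_append)
    then show ?thesis using assms(1) True unfolding legalp_def by auto
  next
    case False
    define k where "k = i - length T"
    have k: "i = length T + k" "k < length U" using False i unfolding k_def by auto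
    have "(\<Union>j<i. cnbhd G ((T @ U) ! j)) = \<Union>(cnbhd G ` set T) \<union> (\<Union>j<k. cnbhd G (U ! j))"
    proof
      show "(\<Union>j<i. cnbhd G ((T @ U) ! j)) \<subseteq> \<Union>(cnbhd G ` set T) \<union> (\<Union>j<k. cnbhd G (U ! j))"
      proof
        fix z assume "z \<in> (\<Union>j<i. cnbhd G ((T @ U) ! j))"
        then obtain j where j: "j < i" "z \<in> cnbhd G ((T @ U) ! j)" by auto
        show "z \<in> \<Union>(cnbhd G ` set T) \<union> (\<Union>j<k. cnbhd G (U ! j))"
        proof (cases "j < length T")
          case True then show ?thesis using j by (auto simp: nth_append)
        next
          case False then show ?thesis using j k
            by (auto simp: nth_append intro!: exI[of _ "j - length T"])
        qed
      qed
      show "\<Union>(cnbhd G ` set T) \<union> (\<Union>j<k. cnbhd G (U ! j)) \<subseteq> (\<Union>j<i. cnbhd G ((T @ U) ! j))"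
      proof
        fix z assume "z \<in> \<Union>(cnbhd G ` set T) \<union> (\<Union>j<k. cnbhd G (U ! j))"
        then consider (a) "z \<in> \<Union>(cnbhd G ` set T)" | (b) "z \<in> (\<Union>j<k. cnbhd G (U ! j))" by blast
        then show "z \<in> (\<Union>j<i. cnbhd G ((T @ U) ! j))"
        proof cases
          case a
          then obtain j where "j < length T" "z \<in> cnbhd G (T ! j)" by (auto simp: in_set_conv_nth)
          then show ?thesis using k by (auto simp: nth_append intro!: bexI[of _ j])
        next
          case b
          then obtain j where "j < k" "z \<in> cnbhd G (U ! j)" by auto
          then show ?thesis using k by (auto simp: nth_append intro!: bexI[of _ "length T + j"])
        qed
      qed
    qed
    moreover have "(T @ U) ! i = U ! k" using k by (simp add: nth_append)
    ultimately have "pn G (T @ U) i = pn G U k - \<Union>(cnbhd G ` set T)" unfolding pn_def by auto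
    then show ?thesis using assms(5) k by auto
  qed
qed

definition blockseq :: "nat set \<Rightarrow> (nat \<Rightarrow> 'a list) \<Rightarrow> (nat \<Rightarrow> 'a) \<Rightarrow> nat \<Rightarrow> (nat \<times> 'a) list" where
  "blockseq I seqs c j = (if j \<in> I then map (Pair j) (seqs j) else [(j, c j)])"

lemma expand_seq_blockseq: "expand_seq I seqs c Q = concat (map (blockseq I seqs c) Q)"
  unfolding expand_seq_def blockseq_def by simp

lemma expand_snoc: "expand_seq I seqs c (Q @ [q]) = expand_seq I seqs c Q @ blockseq I seqs c q"
  unfolding expand_seq_blockseq by simp

lemma set_expand: "set (expand_seq I seqs c Q) = (\<Union>j\<in>set Q. set (blockseq I seqs c j))"
  unfolding expand_seq_blockseq by simp

definition privcond :: "'v sgraph \<Rightarrow> 'v set \<Rightarrow> 'v list \<Rightarrow> bool" where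
  "privcond G I Q \<longleftrightarrow> (\<forall>k<length Q. \<exists>w\<in>verts G. (w = Q!k \<or> adj G (Q!k) w) \<and> (Q!k \<in> I \<longrightarrow> w = Q!k)
        \<and> (\<forall>k'<k. w \<noteq> Q!k' \<and> \<not> adj G (Q!k') w))"

lemma privcond_snoc: "privcond G I (Q @ [q]) \<longleftrightarrow> privcond G I Q \<and>
   (\<exists>w\<in>verts G. (w = q \<or> adj G q w) \<and> (q \<in> I \<longrightarrow> w = q) \<and> (\<forall>q'\<in>set Q. w \<noteq> q' \<and> \<not> adj G q' w))"
proof -
  define P where "P = (\<lambda>xs k. \<exists>w\<in>verts G. (w = xs!k \<or> adj G (xs!k) w) \<and> (xs!k \<in> I \<longrightarrow> w = xs!k)
        \<and> (\<forall>k'<k. w \<noteq> xs!k' \<and> \<not> adj G (xs!k') w))"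
  have pc: "\<And>xs. privcond G I xs \<longleftrightarrow> (\<forall>k<length xs. P xs k)" unfolding privcond_def P_def by simp
  have 1: "\<And>k. k < length Q \<Longrightarrow> P (Q @ [q]) k = P Q k" unfolding P_def by (simp add: nth_append)
  have 2: "P (Q @ [q]) (length Q) \<longleftrightarrow>
     (\<exists>w\<in>verts G. (w = q \<or> adj G q w) \<and> (q \<in> I \<longrightarrow> w = q) \<and> (\<forall>q'\<in>set Q. w \<noteq> q' \<and> \<not> adj G q' w))"
    unfolding P_def by (simp add: nth_append all_set_conv_all_nth)
  have "(\<forall>k<length (Q @ [q]). P (Q @ [q]) k) \<longleftrightarrow> (\<forall>k<length Q. P (Q @ [q]) k) \<and> P (Q @ [q]) (length Q)"
    by (auto simp: less_Suc_eq)
  then show ?thesis using 1 2 pc by simp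
qed

lemma expand_legalp:
  fixes G :: "nat sgraph" and R :: "nat \<Rightarrow> 'a sgraph"
  assumes seqs: "\<forall>j\<in>I. legal_dom_seq (R j) (seqs j)"
    and cv: "\<forall>j\<in>verts G. c j \<in> verts (R j)"
    and ne: "\<forall>j\<in>verts G. verts (R j) \<noteq> {}"
  shows "distinct Q \<Longrightarrow> set Q \<subseteq> verts G \<Longrightarrow> privcond G I Q \<Longrightarrow>
     legalp (xjoin G R) (expand_seq I seqs c Q) \<and> set (expand_seq I seqs c Q) \<subseteq> {(v, x). v \<in> set Q}"
proof (induction Q rule: rev_induct)
  case Nil
  then show ?case by (simp add: expand_seq_def)
next
  case (snoc q Q)
  let ?H = "xjoin G R"
  let ?T = "expand_seq I seqs c Q"
  let ?U = "blockseq I seqs c q"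
  have IH: "legalp ?H ?T" "set ?T \<subseteq> {(v, x). v \<in> set Q}"
    using snoc.IH snoc.prems privcond_snoc[of G I Q q] by auto
  have qQ: "q \<notin> set Q" "q \<in> verts G" using snoc.prems by auto
  obtain w where w: "w \<in> verts G" "w = q \<or> adj G q w" "q \<in> I \<longrightarrow> w = q"
      "\<forall>q'\<in>set Q. w \<noteq> q' \<and> \<not> adj G q' w"
    using snoc.prems privcond_snoc[of G I Q q] by auto
  have Tv: "set ?T \<subseteq> verts ?H" using IH(1) unfolding legalp_def by auto
  have dom: "\<Union>(cnbhd ?H ` set ?T) \<subseteq> {(u, y). u \<in> set Q \<or> (\<exists>q'\<in>set Q. adj G q' u)}"
  proof
    fix z assume "z \<in> \<Union>(cnbhd ?H ` set ?T)"
    then obtain v x where vx: "(v, x) \<in> set ?T" "z \<in> cnbhd ?H (v, x)" by auto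
    obtain u y where z: "z = (u, y)" by fastforce
    have "v \<in> set Q" using vx IH(2) by auto
    moreover have "(v, x) \<in> verts ?H" using vx Tv by auto
    ultimately show "z \<in> {(u, y). u \<in> set Q \<or> (\<exists>q'\<in>set Q. adj G q' u)}"
      using vx(2) cnbhd_xjoin[of v x G R u y] z by auto
  qed
  have wnd: "\<And>y. (w, y) \<notin> \<Union>(cnbhd ?H ` set ?T)" using dom w(4) by fastforce
  have Ulegal: "distinct ?U \<and> set ?U \<subseteq> verts ?H \<and> (\<forall>i<length ?U. pn ?H ?U i - \<Union>(cnbhd ?H ` set ?T) \<noteq> {})"
  proof (cases "q \<in> I")
    case True
    then have wq: "w = q" using w by auto
    have Lq: "legalp (R q) (seqs q)" using seqs True legal_dom_seq_iff by blast
    have U: "?U = map (Pair q) (seqs q)" unfolding blockseq_def using True by simp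
    have "\<forall>i<length ?U. pn ?H ?U i - \<Union>(cnbhd ?H ` set ?T) \<noteq> {}"
    proof (intro allI impI)
      fix i assume i: "i < length ?U"
      then have i': "i < length (seqs q)" using U by simp
      then obtain y where y: "y \<in> pn (R q) (seqs q) i" using Lq unfolding legalp_def by auto
      have xi: "seqs q ! i \<in> verts (R q)" using Lq i' unfolding legalp_def by auto
      have "(q, y) \<in> pn ?H ?U i"
        unfolding pn_def
      proof
        have xv: "(q, seqs q ! i) \<in> verts ?H" using xi qQ verts_xjoin by fast
        show "(q, y) \<in> cnbhd ?H (?U ! i)" using y i' U cnbhd_xjoin[OF xv, of q y] unfolding pn_def by auto
        show "(q, y) \<notin> (\<Union>j<i. cnbhd ?H (?U ! j))"
        proof
          assume "(q, y) \<in> (\<Union>j<i. cnbhd ?H (?U ! j))"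
          then obtain j where j: "j < i" "(q, y) \<in> cnbhd ?H (q, seqs q ! j)" using U i' by auto
          have "seqs q ! j \<in> verts (R q)" using Lq j i' unfolding legalp_def by auto
          then have xv: "(q, seqs q ! j) \<in> verts ?H" using qQ verts_xjoin by fast
          then have "y \<in> cnbhd (R q) (seqs q ! j)" using j cnbhd_xjoin[OF xv, of q y] by auto
          then show False using y j unfolding pn_def by auto
        qed
      qed
      then show "pn ?H ?U i - \<Union>(cnbhd ?H ` set ?T) \<noteq> {}" using wnd wq by auto
    qed
    moreover have "distinct ?U" using U Lq unfolding legalp_def by (simp add: distinct_map inj_on_def)
    moreover have "set ?U \<subseteq> verts ?H" using U Lq qQ verts_xjoin unfolding legalp_def by fastforce
    ultimately show ?thesis by blast
  next
    case False
    have U: "?U = [(q, c q)]" unfolding blockseq_def using False by simp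
    have cq: "(q, c q) \<in> verts ?H" using verts_xjoin[of q "c q" G R] cv qQ by simp
    have "pn ?H ?U 0 - \<Union>(cnbhd ?H ` set ?T) \<noteq> {}"
    proof (cases "w = q")
      case True
      have "(q, c q) \<in> pn ?H ?U 0" unfolding pn_def using U cnbhd_self by auto
      then show ?thesis using wnd True by auto
    next
      case False
      then have aw: "adj G q w" using w by auto
      obtain y where y: "y \<in> verts (R w)" using ne w by auto
      have "(w, y) \<in> pn ?H ?U 0" unfolding pn_def using U cnbhd_xjoin[OF cq, of w y] aw False y w by auto
      then show ?thesis using wnd by auto
    qed
    then show ?thesis using U cq by auto
  qed
  have disj: "set ?T \<inter> set ?U = {}" using IH(2) qQ unfolding blockseq_def by auto
  have "legalp ?H (?T @ ?U)" using legalp_append[OF IH(1)] Ulegal disj by blast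
  moreover have "set (?T @ ?U) \<subseteq> {(v, x). v \<in> set (Q @ [q])}" using IH(2) unfolding blockseq_def by auto
  ultimately show ?case unfolding expand_snoc by simp
qed

lemma expand_legal_dom:
  fixes G :: "nat sgraph" and R :: "nat \<Rightarrow> 'a sgraph"
  assumes seqs: "\<forall>j\<in>I. legal_dom_seq (R j) (seqs j)"
    and cv: "\<forall>j\<in>verts G. c j \<in> verts (R j)"
    and ne: "\<forall>j\<in>verts G. verts (R j) \<noteq> {}"
    and irr: "\<forall>v. \<not> adj G v v"
    and Q: "distinct Q" "set Q \<subseteq> verts G" "I \<subseteq> set Q" "privcond G I Q"
    and cover: "\<forall>w\<in>verts G - I. \<exists>q\<in>set Q. adj G q w"
  shows "legal_dom_seq (xjoin G R) (expand_seq I seqs c Q)"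
proof -
  let ?H = "xjoin G R"
  let ?S = "expand_seq I seqs c Q"
  have L: "legalp ?H ?S" using expand_legalp[OF seqs cv ne Q(1,2,4)] by blast
  have Sv: "set ?S \<subseteq> verts ?H" using L unfolding legalp_def by auto
  have "verts ?H \<subseteq> \<Union>(cnbhd ?H ` set ?S)"
  proof
    fix z assume z: "z \<in> verts ?H"
    obtain w y where wy: "z = (w, y)" by fastforce
    have w: "w \<in> verts G" "y \<in> verts (R w)" using z wy verts_xjoin[of w y G R] by auto
    show "z \<in> \<Union>(cnbhd ?H ` set ?S)"
    proof (cases "w \<in> I")
      case True
      have "dominating (R w) (set (seqs w))" using seqs True unfolding legal_dom_seq_def by auto
      then obtain x where x: "x \<in> set (seqs w)" "y \<in> cnbhd (R w) x" using w unfolding dominating_def by auto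
      have "(w, x) \<in> set ?S" using x True Q(3) unfolding set_expand blockseq_def by auto
      moreover have "(w, x) \<in> verts ?H" using calculation Sv by auto
      ultimately show ?thesis using cnbhd_xjoin[of w x G R w y] x wy by auto
    next
      case False
      then obtain q where q: "q \<in> set Q" "adj G q w" using cover w by auto
      have qw: "q \<noteq> w" using q irr by auto
      obtain x where x: "(q, x) \<in> set ?S"
      proof (cases "q \<in> I")
        case True
        have "dominating (R q) (set (seqs q))" using seqs True unfolding legal_dom_seq_def by auto
        moreover have "verts (R q) \<noteq> {}" using ne q Q(2) by auto
        ultimately have "seqs q \<noteq> []" unfolding dominating_def by auto
        then obtain x where x: "x \<in> set (seqs q)" by (meson list.set_sel(1))
        have "(q, x) \<in> set (blockseq I seqs c q)" using x True unfolding blockseq_def by auto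
        then have "(q, x) \<in> set ?S" using q unfolding set_expand by blast
        then show ?thesis using that by blast
      next
        case False
        have "(q, c q) \<in> set (blockseq I seqs c q)" using False unfolding blockseq_def by auto
        then have "(q, c q) \<in> set ?S" using q unfolding set_expand by blast
        then show ?thesis using that by blast
      qed
      have xv: "(q, x) \<in> verts ?H" using x Sv by auto
      then show ?thesis using cnbhd_xjoin[OF xv, of w y] x wy q qw w by auto
    qed
  qed
  then have "dominating ?H (set ?S)" using dominating_iff[OF Sv] by simp
  then show ?thesis using L legal_dom_seq_iff by blast
qed

lemma length_expand:
  assumes "distinct Q" "I \<subseteq> set Q"
  shows "length (expand_seq I seqs c Q) = (\<Sum>j\<in>I. length (seqs j)) + card (set Q - I)"
proof -
  have "length (expand_seq I seqs c Q) = (\<Sum>j\<leftarrow>Q. length (blockseq I seqs c j))"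
    unfolding expand_seq_blockseq by (simp add: length_concat comp_def)
  also have "\<dots> = (\<Sum>j\<in>set Q. length (blockseq I seqs c j))"
    using assms(1) by (simp add: sum_list_distinct_conv_sum_set)
  also have "\<dots> = (\<Sum>j\<in>I. length (blockseq I seqs c j)) + (\<Sum>j\<in>set Q - I. length (blockseq I seqs c j))"
    using assms(2) by (metis List.finite_set sum.subset_diff add.commute)
  also have "\<dots> = (\<Sum>j\<in>I. length (seqs j)) + card (set Q - I)"
    unfolding blockseq_def by simp
  finally show ?thesis .
qed


locale jseq =
  fixes G :: "'v sgraph" and R :: "'v \<Rightarrow> 'a sgraph" and S :: "('v \<times> 'a) list"
  assumes symG: "adj G u v \<Longrightarrow> adj G v u"
    and irrG: "\<not> adj G v v"
    and adjV: "adj G u v \<Longrightarrow> u \<in> verts G \<and> v \<in> verts G"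
    and finG: "finite (verts G)"
    and finR: "v \<in> verts G \<Longrightarrow> finite (verts (R v))"
    and legal: "legal_dom_seq (xjoin G R) S"
begin

abbreviation "H \<equiv> xjoin G R"
abbreviation "len \<equiv> length S"
definition b :: "nat \<Rightarrow> 'v" where "b t = fst (S ! t)"
definition x :: "nat \<Rightarrow> 'a" where "x t = snd (S ! t)"
definition nd :: "nat \<Rightarrow> 'v \<Rightarrow> bool" where "nd t w \<longleftrightarrow> (\<exists>t'<t. adj G (b t') w)"
definition Pos :: "'v \<Rightarrow> nat set" where "Pos v = {t. t < len \<and> b t = v}"
definition focc :: "'v \<Rightarrow> nat" where "focc v = (LEAST t. t < len \<and> b t = v)"
definition EE :: "'v set" where "EE = {v. Pos v \<noteq> {} \<and> \<not> nd (focc v) v}"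
definition LL :: "'v set" where "LL = {v. Pos v \<noteq> {} \<and> nd (focc v) v}"
definition DD :: "'v \<Rightarrow> 'v set" where "DD e = {w. adj G e w \<and> \<not> nd (focc e) w}"

lemma S_nth: "S ! t = (b t, x t)" unfolding b_def x_def by simp

lemma Sv: "t < len \<Longrightarrow> b t \<in> verts G \<and> x t \<in> verts (R (b t))"
  using legal verts_xjoin[of "b t" "x t" G R] S_nth[of t] unfolding legal_dom_seq_def
  by (metis nth_mem subsetD)

lemma nd_mono: "nd t w \<Longrightarrow> t \<le> t2 \<Longrightarrow> nd t2 w"
  unfolding nd_def using less_le_trans by blast

lemma focc: assumes "Pos v \<noteq> {}"
  shows "focc v < len" "b (focc v) = v" "\<And>t. t < focc v \<Longrightarrow> b t \<noteq> v" "focc v \<in> Pos v"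
    "\<And>t. t \<in> Pos v \<Longrightarrow> focc v \<le> t"
proof -
  obtain t where t: "t < len \<and> b t = v" using assms unfolding Pos_def by auto
  show "focc v < len" "b (focc v) = v" using LeastI[of "\<lambda>t. t < len \<and> b t = v", OF t] unfolding focc_def by auto
  then show "focc v \<in> Pos v" unfolding Pos_def by auto
  fix t' assume "t' < focc v"
  then show "b t' \<noteq> v" unfolding focc_def using not_less_Least[of t' "\<lambda>t. t < len \<and> b t = v"]
    using \<open>focc v < len\<close> unfolding focc_def by auto
next
  fix t' assume "t' \<in> Pos v"
  then show "focc v \<le> t'" unfolding focc_def Pos_def by (auto intro: Least_le)
qed

lemma dom_iff: "t \<le> len \<Longrightarrow> (w, y) \<in> (\<Union>j<t. cnbhd H (S ! j)) \<longleftrightarrow>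
   (\<exists>j<t. (b j = w \<and> y \<in> cnbhd (R w) (x j)) \<or> (b j \<noteq> w \<and> adj G (b j) w \<and> w \<in> verts G \<and> y \<in> verts (R w)))"
proof -
  assume t: "t \<le> len"
  have "\<And>j. j < t \<Longrightarrow> (w, y) \<in> cnbhd H (S ! j) \<longleftrightarrow>
     (b j = w \<and> y \<in> cnbhd (R w) (x j)) \<or> (b j \<noteq> w \<and> adj G (b j) w \<and> w \<in> verts G \<and> y \<in> verts (R w))"
  proof -
    fix j assume "j < t"
    then have "(b j, x j) \<in> verts H" using Sv[of j] t verts_xjoin[of "b j" "x j" G R] by auto
    from cnbhd_xjoin[OF this, of w y] show "?thesis j" using S_nth[of j] by auto
  qed
  then show ?thesis by blast
qed

lemma priv: assumes t: "t < len"
  obtains w y where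
    "(w = b t \<and> y \<in> cnbhd (R w) (x t)) \<or> (w \<noteq> b t \<and> adj G (b t) w \<and> y \<in> verts (R w))"
    "\<And>j. j < t \<Longrightarrow> b j = w \<Longrightarrow> y \<notin> cnbhd (R w) (x j)"
    "\<not> nd t w"
proof -
  have "pn H S t \<noteq> {}" using legal t unfolding legal_dom_seq_def by auto
  then obtain w y where wy: "(w, y) \<in> cnbhd H (S ! t)" "(w, y) \<notin> (\<Union>j<t. cnbhd H (S ! j))"
    unfolding pn_def by auto
  have tv: "(b t, x t) \<in> verts H" using Sv[OF t] verts_xjoin[of "b t" "x t" G R] by auto
  have 1: "(w = b t \<and> y \<in> cnbhd (R w) (x t)) \<or> (w \<noteq> b t \<and> adj G (b t) w \<and> w \<in> verts G \<and> y \<in> verts (R w))"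
    using wy(1) cnbhd_xjoin[OF tv, of w y] S_nth[of t] by auto
  have 2: "\<not> (\<exists>j<t. (b j = w \<and> y \<in> cnbhd (R w) (x j)) \<or> (b j \<noteq> w \<and> adj G (b j) w \<and> w \<in> verts G \<and> y \<in> verts (R w)))"
    using wy(2) dom_iff[of t w y] t by auto
  have wv: "w \<in> verts G \<and> y \<in> verts (R w)"
  proof (cases "w = b t")
    case True
    then have "y \<in> cnbhd (R w) (x t)" using 1 irrG by auto
    then show ?thesis using Sv[OF t] True unfolding cnbhd_def by auto
  next
    case False then show ?thesis using 1 by auto
  qed
  have "\<not> nd t w"
  proof
    assume "nd t w"
    then obtain j where j: "j < t" "adj G (b j) w" unfolding nd_def by auto
    then have "b j \<noteq> w" using irrG by auto
    then show False using 2 j wv by auto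
  qed
  then show ?thesis using that[of w y] 1 2 by auto
qed

lemma same_block_own: assumes t: "t < len" and j: "j < t" "b j = b t"
  obtains y where "y \<in> cnbhd (R (b t)) (x t)" "\<And>j. j < t \<Longrightarrow> b j = b t \<Longrightarrow> y \<notin> cnbhd (R (b t)) (x j)"
    "\<not> nd t (b t)"
proof -
  obtain w y where wy: "(w = b t \<and> y \<in> cnbhd (R w) (x t)) \<or> (w \<noteq> b t \<and> adj G (b t) w \<and> y \<in> verts (R w))"
    "\<And>j. j < t \<Longrightarrow> b j = w \<Longrightarrow> y \<notin> cnbhd (R w) (x j)" "\<not> nd t w"
    using priv[OF t] by blast
  have "w = b t"
  proof (rule ccontr)
    assume "w \<noteq> b t"
    then have "adj G (b j) w" using wy(1) j by auto
    then have "nd t w" unfolding nd_def using j by auto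
    then show False using wy(3) by auto
  qed
  then show ?thesis using that[of y] wy by auto
qed

lemma Pos_fin: "finite (Pos v)" unfolding Pos_def by auto

lemma EE_not_nd: assumes "v \<in> EE" "t \<in> Pos v" shows "\<not> nd t v"
proof (cases "t = focc v")
  case True then show ?thesis using assms unfolding EE_def by auto
next
  case False
  have ne: "Pos v \<noteq> {}" using assms by auto
  have "focc v < t" using focc(5)[OF ne assms(2)] False by auto
  moreover have "b (focc v) = b t" "t < len" using focc(2)[OF ne] assms(2) unfolding Pos_def by auto
  ultimately obtain y where "\<not> nd t (b t)" using same_block_own by metis
  then show ?thesis using assms(2) unfolding Pos_def by auto
qed

lemma LL_card: assumes "v \<in> LL" shows "card (Pos v) \<le> 1"
proof -
  have ne: "Pos v \<noteq> {}" and nd0: "nd (focc v) v" using assms unfolding LL_def by auto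
  have "Pos v \<subseteq> {focc v}"
  proof
    fix t assume t: "t \<in> Pos v"
    show "t \<in> {focc v}"
    proof (rule ccontr)
      assume "t \<notin> {focc v}"
      then have lt: "focc v < t" using focc(5)[OF ne t] by auto
      have "b (focc v) = b t" "t < len" using focc(2)[OF ne] t unfolding Pos_def by auto
      then obtain y where "\<not> nd t (b t)" using same_block_own lt by metis
      moreover have "nd t v" using nd_mono[OF nd0] lt by auto
      ultimately show False using t unfolding Pos_def by auto
    qed
  qed
  then have "card (Pos v) \<le> card {focc v}" by (intro card_mono) auto
  then show ?thesis by simp
qed

lemma Pos_priv: assumes "t \<in> Pos v"
  shows "\<exists>y\<in>cnbhd (R v) (x t). \<forall>t'\<in>Pos v. t' < t \<longrightarrow> y \<notin> cnbhd (R v) (x t')"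
proof (cases "t = focc v")
  case True
  have ne: "Pos v \<noteq> {}" using assms by auto
  show ?thesis using True focc(5)[OF ne] cnbhd_self[of "x t" "R v"] by force
next
  case False
  have ne: "Pos v \<noteq> {}" using assms by auto
  have lt: "focc v < t" using focc(5)[OF ne assms] False by auto
  have "b (focc v) = b t" "t < len" "b t = v" using focc(2)[OF ne] assms unfolding Pos_def by auto
  then obtain y where "y \<in> cnbhd (R v) (x t)" "\<And>j. j < t \<Longrightarrow> b j = v \<Longrightarrow> y \<notin> cnbhd (R v) (x j)"
    using same_block_own[of t "focc v"] lt by metis
  then show ?thesis unfolding Pos_def by auto
qed

lemma Pos_inj: "inj_on x (Pos v)"
proof
  fix t t' assume tt: "t \<in> Pos v" "t' \<in> Pos v" "x t = x t'"
  then have "S ! t = S ! t'" using S_nth[of t] S_nth[of t'] unfolding Pos_def by auto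
  moreover have "distinct S" using legal unfolding legal_dom_seq_def by auto
  ultimately show "t = t'" using tt nth_eq_iff_index_eq unfolding Pos_def by auto
qed

lemma Pos_verts: "t \<in> Pos v \<Longrightarrow> v \<in> verts G \<and> x t \<in> verts (R v)"
  using Sv unfolding Pos_def by auto

lemma EE_bound: assumes "v \<in> EE" shows "card (Pos v) \<le> gamma_gr (R v)"
proof -
  have ne: "Pos v \<noteq> {}" using assms unfolding EE_def by auto
  have vG: "v \<in> verts G" using Pos_verts ne by auto
  show ?thesis
    using card_le_gamma[OF finR[OF vG] Pos_fin, where f = x] Pos_verts Pos_inj Pos_priv by blast
qed

lemma EE_bound_t: assumes "v \<in> EE" "y \<in> verts (R v)" "\<forall>t\<in>Pos v. y \<notin> cnbhd (R v) (x t)"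
  shows "card (Pos v) + 1 \<le> gamma_gr (R v)"
proof -
  have ne: "Pos v \<noteq> {}" using assms unfolding EE_def by auto
  have vG: "v \<in> verts G" using Pos_verts ne by auto
  define P where "P = insert len (Pos v)"
  define f where "f = x(len := y)"
  have lenP: "len \<notin> Pos v" unfolding Pos_def by auto
  have fP: "\<And>t. t \<in> Pos v \<Longrightarrow> f t = x t" unfolding f_def using lenP by auto
  have "card P \<le> gamma_gr (R v)"
  proof (rule card_le_gamma[OF finR[OF vG]])
    show "finite P" unfolding P_def using Pos_fin by auto
    show "\<forall>t\<in>P. f t \<in> verts (R v)" unfolding P_def using fP Pos_verts assms(2) f_def by auto
    show "inj_on f P" unfolding P_def
    proof (rule inj_on_insert[THEN iffD2], intro conjI)
      show "inj_on f (Pos v)" using Pos_inj fP inj_on_cong by blast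
      show "f len \<notin> f ` (Pos v - {len})"
      proof
        assume "f len \<in> f ` (Pos v - {len})"
        then obtain t where "t \<in> Pos v" "y = x t" using fP unfolding f_def by auto
        then show False using assms(3) cnbhd_self[of "x t" "R v"] by auto
      qed
    qed
    show "\<forall>t\<in>P. \<exists>ya\<in>cnbhd (R v) (f t). \<forall>t'\<in>P. t' < t \<longrightarrow> ya \<notin> cnbhd (R v) (f t')"
    proof
      fix t assume t: "t \<in> P"
      show "\<exists>ya\<in>cnbhd (R v) (f t). \<forall>t'\<in>P. t' < t \<longrightarrow> ya \<notin> cnbhd (R v) (f t')"
      proof (cases "t = len")
        case True
        have "\<forall>t'\<in>P. t' < len \<longrightarrow> y \<notin> cnbhd (R v) (f t')"
        proof (intro ballI impI)
          fix t' assume "t' \<in> P" "t' < len"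
          then have "t' \<in> Pos v" unfolding P_def by auto
          then show "y \<notin> cnbhd (R v) (f t')" using assms(3) fP by auto
        qed
        moreover have "f len = y" unfolding f_def by simp
        ultimately show ?thesis using True cnbhd_self[of y "R v"] by auto
      next
        case False
        then have tP: "t \<in> Pos v" using t unfolding P_def by auto
        then have tl: "t < len" unfolding Pos_def by auto
        obtain ya where "ya \<in> cnbhd (R v) (x t)" "\<forall>t'\<in>Pos v. t' < t \<longrightarrow> ya \<notin> cnbhd (R v) (x t')"
          using Pos_priv[OF tP] by blast
        then show ?thesis using fP tP tl unfolding P_def by auto
      qed
    qed
  qed
  moreover have "card P = card (Pos v) + 1" unfolding P_def using lenP Pos_fin by auto
  ultimately show ?thesis by simp
qed

lemma EE_LL_disj: "EE \<inter> LL = {}" unfolding EE_def LL_def by auto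

lemma EE_sub: "EE \<subseteq> verts G" using Pos_verts unfolding EE_def by blast
lemma LL_sub: "LL \<subseteq> verts G" using Pos_verts unfolding LL_def by blast

lemma nd_at: "Pos v \<noteq> {} \<Longrightarrow> adj G v w \<Longrightarrow> focc v < t \<Longrightarrow> nd t w"
  unfolding nd_def using focc(2) by metis

lemma focc_eq: "Pos v \<noteq> {} \<Longrightarrow> Pos v' \<noteq> {} \<Longrightarrow> focc v = focc v' \<Longrightarrow> v = v'"
  using focc(2) by metis

lemma EE_indep: assumes "e \<in> EE" "f \<in> EE" shows "\<not> adj G e f"
proof
  assume a: "adj G e f"
  have ne: "Pos e \<noteq> {}" "Pos f \<noteq> {}" and nd: "\<not> nd (focc e) e" "\<not> nd (focc f) f" using assms unfolding EE_def by auto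
  have "e \<noteq> f" using a irrG by auto
  then have "focc e \<noteq> focc f" using focc_eq ne by auto
  then consider "focc e < focc f" | "focc f < focc e" by linarith
  then show False
  proof cases
    case 1 then show ?thesis using nd_at[OF ne(1) a] nd by auto
  next
    case 2 then show ?thesis using nd_at[OF ne(2) symG[OF a]] nd by auto
  qed
qed

lemma DD_disj: assumes "e \<in> EE" "f \<in> EE" "e \<noteq> f" shows "DD e \<inter> DD f = {}"
proof (rule ccontr)
  assume "DD e \<inter> DD f \<noteq> {}"
  then obtain w where w: "adj G e w" "\<not> nd (focc e) w" "adj G f w" "\<not> nd (focc f) w" unfolding DD_def by auto
  have ne: "Pos e \<noteq> {}" "Pos f \<noteq> {}" using assms unfolding EE_def by auto
  then have "focc e \<noteq> focc f" using focc_eq assms(3) by auto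
  then consider "focc e < focc f" | "focc f < focc e" by linarith
  then show False
  proof cases
    case 1 then show ?thesis using nd_at[OF ne(1) w(1)] w by auto
  next
    case 2 then show ?thesis using nd_at[OF ne(2) w(3)] w by auto
  qed
qed

lemma DD_EE: "e \<in> EE \<Longrightarrow> DD e \<inter> EE = {}"
  using EE_indep unfolding DD_def by auto

lemma DD_sub: "DD e \<subseteq> verts G" using adjV unfolding DD_def by auto

lemma LL_target: assumes "v \<in> LL"
  shows "\<exists>w y. adj G v w \<and> \<not> nd (focc v) w \<and> y \<in> verts (R w) \<and> (\<forall>j<focc v. b j = w \<longrightarrow> y \<notin> cnbhd (R w) (x j))"
proof -
  have ne: "Pos v \<noteq> {}" and ndv: "nd (focc v) v" using assms unfolding LL_def by auto
  obtain w y where wy: "(w = b (focc v) \<and> y \<in> cnbhd (R w) (x (focc v))) \<or> (w \<noteq> b (focc v) \<and> adj G (b (focc v)) w \<and> y \<in> verts (R w))"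
    "\<And>j. j < focc v \<Longrightarrow> b j = w \<Longrightarrow> y \<notin> cnbhd (R w) (x j)" "\<not> nd (focc v) w"
    using priv[OF focc(1)[OF ne]] by blast
  have "w \<noteq> v" using wy(3) ndv by auto
  then show ?thesis using wy focc(2)[OF ne] by auto
qed

definition phi :: "'v \<Rightarrow> 'v" where
  "phi v = (SOME w. \<exists>y. adj G v w \<and> \<not> nd (focc v) w \<and> y \<in> verts (R w) \<and> (\<forall>j<focc v. b j = w \<longrightarrow> y \<notin> cnbhd (R w) (x j)))"

lemma phi: "v \<in> LL \<Longrightarrow> \<exists>y. adj G v (phi v) \<and> \<not> nd (focc v) (phi v) \<and> y \<in> verts (R (phi v)) \<and> (\<forall>j<focc v. b j = phi v \<longrightarrow> y \<notin> cnbhd (R (phi v)) (x j))"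
  unfolding phi_def using LL_target by (rule someI_ex) auto

lemma phi_inj: "inj_on phi LL"
proof
  fix v v' assume vv: "v \<in> LL" "v' \<in> LL" "phi v = phi v'"
  have ne: "Pos v \<noteq> {}" "Pos v' \<noteq> {}" using vv unfolding LL_def by auto
  have a: "adj G v (phi v)" "\<not> nd (focc v) (phi v)" "adj G v' (phi v)" "\<not> nd (focc v') (phi v)"
    using phi[OF vv(1)] phi[OF vv(2)] vv(3) by auto
  show "v = v'"
  proof (rule ccontr)
    assume "v \<noteq> v'"
    then have "focc v \<noteq> focc v'" using focc_eq ne by auto
    then consider "focc v < focc v'" | "focc v' < focc v" by linarith
    then show False
    proof cases
      case 1 then show ?thesis using nd_at[OF ne(1) a(1)] a by auto
    next
      case 2 then show ?thesis using nd_at[OF ne(2) a(3)] a by auto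
    qed
  qed
qed

lemma phi_notDD: assumes "v \<in> LL" "e \<in> EE" shows "phi v \<notin> DD e"
proof
  assume "phi v \<in> DD e"
  then have d: "adj G e (phi v)" "\<not> nd (focc e) (phi v)" unfolding DD_def by auto
  have a: "adj G v (phi v)" "\<not> nd (focc v) (phi v)" using phi[OF assms(1)] by auto
  have ne: "Pos v \<noteq> {}" "Pos e \<noteq> {}" using assms unfolding LL_def EE_def by auto
  have "v \<noteq> e" using assms EE_LL_disj by auto
  then have "focc v \<noteq> focc e" using focc_eq ne by auto
  then consider "focc v < focc e" | "focc e < focc v" by linarith
  then show False
  proof cases
    case 1 then show ?thesis using nd_at[OF ne(1) a(1)] d by auto
  next
    case 2 then show ?thesis using nd_at[OF ne(2) d(1)] a by auto
  qed
qed

definition TE :: "'v set" where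
  "TE = {e \<in> EE. \<exists>y\<in>verts (R e). \<forall>t\<in>Pos e. y \<notin> cnbhd (R e) (x t)}"

lemma phi_EE: assumes "v \<in> LL" "phi v \<in> EE" shows "phi v \<in> TE"
proof -
  let ?e = "phi v"
  obtain y where y: "adj G v ?e" "y \<in> verts (R ?e)" "\<forall>j<focc v. b j = ?e \<longrightarrow> y \<notin> cnbhd (R ?e) (x j)"
    using phi[OF assms(1)] by auto
  have ne: "Pos v \<noteq> {}" using assms unfolding LL_def by auto
  have ve: "v \<noteq> ?e" using assms EE_LL_disj by auto
  have "\<forall>t\<in>Pos ?e. y \<notin> cnbhd (R ?e) (x t)"
  proof
    fix t assume t: "t \<in> Pos ?e"
    have "\<not> nd t ?e" using EE_not_nd[OF assms(2) t] .
    then have "\<not> focc v < t" using nd_at[OF ne y(1)] by auto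
    moreover have "t \<noteq> focc v" using t focc(2)[OF ne] ve unfolding Pos_def by auto
    ultimately have "t < focc v" by auto
    then show "y \<notin> cnbhd (R ?e) (x t)" using y(3) t unfolding Pos_def by auto
  qed
  then show ?thesis unfolding TE_def using assms(2) y(2) by auto
qed

lemma len_sum: "len = (\<Sum>v\<in>verts G. card (Pos v))"
proof -
  have "{..<len} = (\<Union>v\<in>verts G. Pos v)" using Sv unfolding Pos_def by auto
  then have "card {..<len} = card (\<Union>v\<in>verts G. Pos v)" by simp
  also have "\<dots> = (\<Sum>v\<in>verts G. card (Pos v))"
    by (rule card_UN_disjoint[OF finG]) (auto simp: Pos_fin Pos_def)
  finally show ?thesis by simp
qed

lemma main_count:
  "len + card EE + card (\<Union>e\<in>EE. DD e) \<le> (\<Sum>e\<in>EE. gamma_gr (R e)) + card (verts G)"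
proof -
  let ?V = "verts G"
  let ?D = "\<Union>e\<in>EE. DD e"
  have finE: "finite EE" "finite LL" using EE_sub LL_sub finG finite_subset by auto
  have finD: "finite ?D" using DD_sub finG finite_subset by (metis UN_subset_iff)
  have rest: "\<And>v. v \<in> ?V - (EE \<union> LL) \<Longrightarrow> card (Pos v) = 0" unfolding EE_def LL_def by auto
  have "len = (\<Sum>v\<in>?V. card (Pos v))" by (rule len_sum)
  also have "\<dots> = (\<Sum>v\<in>EE \<union> LL. card (Pos v)) + (\<Sum>v\<in>?V - (EE \<union> LL). card (Pos v))"
    using EE_sub LL_sub finG by (metis Un_subset_iff sum.subset_diff add.commute)
  also have "\<dots> = (\<Sum>v\<in>EE. card (Pos v)) + (\<Sum>v\<in>LL. card (Pos v))"
    using rest finE EE_LL_disj by (simp add: sum.union_disjoint)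
  finally have len_eq: "len = (\<Sum>v\<in>EE. card (Pos v)) + (\<Sum>v\<in>LL. card (Pos v))" .
  have L1: "(\<Sum>v\<in>LL. card (Pos v)) \<le> card LL"
    using sum_mono[of LL "\<lambda>v. card (Pos v)" "\<lambda>v. 1"] LL_card by auto
  have cLL: "card LL = card (phi ` LL)" using card_image[OF phi_inj] by simp
  have split: "card (phi ` LL) \<le> card (phi ` LL \<inter> EE) + card (phi ` LL - EE)"
    by (metis card_Un_le Int_Diff_Un)
  have T1: "card (phi ` LL \<inter> EE) \<le> card TE"
  proof (rule card_mono)
    show "finite TE" using finE(1) unfolding TE_def by auto
    show "phi ` LL \<inter> EE \<subseteq> TE" using phi_EE by blast
  qed
  have phiV: "phi ` LL \<subseteq> ?V" using phi adjV by blast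
  have T2: "phi ` LL - EE \<subseteq> ?V - (EE \<union> ?D)" using phiV phi_notDD by blast
  have cD: "card (EE \<union> ?D) = card EE + card ?D"
    using DD_EE finE finD by (subst card_Un_disjoint) auto
  have sub: "EE \<union> ?D \<subseteq> ?V" using EE_sub DD_sub by blast
  have T3: "card (phi ` LL - EE) \<le> card ?V - (card EE + card ?D)"
    using card_mono[OF _ T2] finG card_Diff_subset[OF _ sub] cD finite_subset[OF sub finG] by auto
  have cV: "card EE + card ?D \<le> card ?V" using card_mono[OF finG sub] cD by auto
  have TEsub: "TE \<subseteq> EE" unfolding TE_def by auto
  have "(\<Sum>v\<in>EE. card (Pos v)) + card TE = (\<Sum>v\<in>EE. card (Pos v) + (if v \<in> TE then 1 else 0))"
  proof -
    have "(\<Sum>v\<in>EE. (if v \<in> TE then 1 else 0)) = card TE"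
    proof -
      have "{v \<in> EE. v \<in> TE} = TE" using TEsub by auto
      then show ?thesis using sum.inter_filter[OF finE(1), of "\<lambda>_. 1::nat" "\<lambda>v. v \<in> TE"] by simp
    qed
    then show ?thesis by (simp add: sum.distrib)
  qed
  also have "\<dots> \<le> (\<Sum>v\<in>EE. gamma_gr (R v))"
  proof (rule sum_mono)
    fix v assume v: "v \<in> EE"
    show "card (Pos v) + (if v \<in> TE then 1 else 0) \<le> gamma_gr (R v)"
    proof (cases "v \<in> TE")
      case True
      then obtain y where "y \<in> verts (R v)" "\<forall>t\<in>Pos v. y \<notin> cnbhd (R v) (x t)" unfolding TE_def by auto
      then show ?thesis using EE_bound_t[OF v] True by auto
    next
      case False then show ?thesis using EE_bound[OF v] by auto
    qed
  qed
  finally have G1: "(\<Sum>v\<in>EE. card (Pos v)) + card TE \<le> (\<Sum>v\<in>EE. gamma_gr (R v))" .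
  show ?thesis using len_eq L1 cLL split T1 T3 cV G1 by linarith
qed

end


lemma between:
  assumes "e \<in> {1..n}" "e' \<in> {1..n}" "v \<in> {1..n}" "u \<in> {1..n}" "e \<noteq> e'"
    "0 < off n e v" "off n e v < off n e e'"
    "adj (cycle_pow n m) v u" "u \<noteq> e" "u \<noteq> e'" "\<not> (0 < off n e u \<and> off n e u < off n e e')"
  shows "adj (cycle_pow n m) u e \<or> adj (cycle_pow n m) u e'"
proof -
  have t1: "off n v u = (if off n e v \<le> off n e u then off n e u - off n e v else n + off n e u - off n e v)"
    using off_trans assms by blast
  have t2: "off n u v = (if off n e u \<le> off n e v then off n e v - off n e u else n + off n e v - off n e u)"
    using off_trans assms by blast
  have t3: "off n e' u = (if off n e e' \<le> off n e u then off n e u - off n e e' else n + off n e u - off n e e')"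
    using off_trans assms by blast
  have t4: "off n u e = (if off n e u \<le> off n e e then off n e e - off n e u else n + off n e e - off n e u)"
    using off_trans assms by blast
  have l: "off n e u < n" "off n e e' < n" using off_lt assms by auto
  have nz: "off n e u \<noteq> 0" using off_0_iff assms by auto
  have ne': "off n e u \<noteq> off n e e'" using off_inj assms by metis
  have a: "off n v u \<le> m \<or> off n u v \<le> m" using assms(8) adjC_iff by auto
  have cK: "off n e e' < off n e u" using nz ne' assms(11) by auto
  have av: "off n e v < off n e u" using cK assms(7) by auto
  have e1: "off n v u = off n e u - off n e v" using t1 av by simp
  have e2: "off n u v = n + off n e v - off n e u" using t2 av by simp
  have e3: "off n e' u = off n e u - off n e e'" using t3 cK by simp
  have e4: "off n u e = n - off n e u" using t4 nz by simp
  have "off n e' u \<le> m \<or> off n u e \<le> m" using a e1 e2 e3 e4 l assms(6,7) cK av by linarith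
  then show ?thesis using adjC_iff assms by auto
qed

locale cjseq = jseq "cycle_pow n m" R S for n m :: nat and R :: "nat \<Rightarrow> 'a sgraph" and S +
  assumes m1: "1 \<le> m" and nm: "2 * (m + 1) \<le> n"
begin

abbreviation "C \<equiv> cycle_pow n m"

lemma EE_props: assumes "e \<in> EE"
  shows "focc e < len" "b (focc e) = e" "\<And>t. t < focc e \<Longrightarrow> b t \<noteq> e" "\<not> nd (focc e) e" "e \<in> {1..n}"
  using assms focc[of e] EE_sub unfolding EE_def by auto

lemma nonEE_nd: assumes "t < len" "b t \<notin> EE" shows "nd t (b t)"
proof -
  have "t \<in> Pos (b t)" using assms unfolding Pos_def by auto
  then have ne: "Pos (b t) \<noteq> {}" by auto
  then have "nd (focc (b t)) (b t)" using assms unfolding EE_def by auto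
  then show ?thesis using nd_mono focc(5)[OF ne \<open>t \<in> Pos (b t)\<close>] by blast
qed

lemma b_in: "t < len \<Longrightarrow> b t \<in> {1..n}" using Sv by auto

definition Rs :: "nat \<Rightarrow> nat set" where "Rs e = {w \<in> {1..n}. 1 \<le> off n e w \<and> off n e w \<le> m}"
definition Ls :: "nat \<Rightarrow> nat set" where "Ls e = {w \<in> {1..n}. 1 \<le> off n w e \<and> off n w e \<le> m}"

lemma Rs_adj: "e \<in> {1..n} \<Longrightarrow> w \<in> Rs e \<Longrightarrow> adj C e w"
  unfolding Rs_def adjC_iff by auto
lemma Ls_adj: "e \<in> {1..n} \<Longrightarrow> w \<in> Ls e \<Longrightarrow> adj C e w"
  unfolding Ls_def adjC_iff by auto

lemma Rs_Ls_disj: "e \<in> {1..n} \<Longrightarrow> Rs e \<inter> Ls e = {}"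
proof -
  assume e: "e \<in> {1..n}"
  { fix w assume w: "w \<in> Rs e" "w \<in> Ls e"
    then have w1: "w \<in> {1..n}" "e \<noteq> w" unfolding Rs_def by auto
    have "off n e w + off n w e = n" "off n e w \<le> m" "off n w e \<le> m"
      using off_swap[OF e w1] w unfolding Rs_def Ls_def by auto
    then have False using nm by auto }
  then show ?thesis by auto
qed

lemma card_Rs: assumes "e \<in> {1..n}" shows "card (Rs e) = m"
proof -
  have "Rs e = pt n e ` {1..m}"
  proof
    show "Rs e \<subseteq> pt n e ` {1..m}"
    proof
      fix w assume w: "w \<in> Rs e"
      then have w1: "w \<in> {1..n}" "off n e w \<in> {1..m}" unfolding Rs_def by auto
      then have "w = pt n e (off n e w)" using pt_off[OF assms w1(1)] by simp
      then show "w \<in> pt n e ` {1..m}" using w1(2) by blast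
    qed
    show "pt n e ` {1..m} \<subseteq> Rs e"
    proof
      fix w assume "w \<in> pt n e ` {1..m}"
      then obtain d where d: "d \<in> {1..m}" "w = pt n e d" by auto
      then have dn: "d < n" using nm by auto
      have "off n e w = d" using off_pt[OF assms dn] d(2) by simp
      moreover have "w \<in> {1..n}" using pt_in[OF assms dn] d(2) by simp
      ultimately show "w \<in> Rs e" using d(1) unfolding Rs_def by simp
    qed
  qed
  moreover have "inj_on (pt n e) {1..m}"
  proof
    fix d d' assume dd: "d \<in> {1..m}" "d' \<in> {1..m}" "pt n e d = pt n e d'"
    then have "d < n" "d' < n" using nm by auto
    then show "d = d'" using off_pt[OF assms \<open>d < n\<close>] off_pt[OF assms \<open>d' < n\<close>] dd(3) by metis
  qed
  ultimately show ?thesis by (simp add: card_image)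
qed

lemma card_Ls: assumes "e \<in> {1..n}" shows "card (Ls e) = m"
proof -
  have "Ls e = (\<lambda>d. pt n e (n - d)) ` {1..m}"
  proof
    show "Ls e \<subseteq> (\<lambda>d. pt n e (n - d)) ` {1..m}"
    proof
      fix w assume w: "w \<in> Ls e"
      then have w1: "w \<in> {1..n}" "e \<noteq> w" "off n w e \<in> {1..m}" unfolding Ls_def by auto
      have "off n e w + off n w e = n" using off_swap[OF assms w1(1,2)] .
      then have "off n e w = n - off n w e" by simp
      then have "w = pt n e (n - off n w e)" using pt_off[OF assms w1(1)] by simp
      then show "w \<in> (\<lambda>d. pt n e (n - d)) ` {1..m}" using w1(3) by blast
    qed
    show "(\<lambda>d. pt n e (n - d)) ` {1..m} \<subseteq> Ls e"
    proof
      fix w assume "w \<in> (\<lambda>d. pt n e (n - d)) ` {1..m}"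
      then obtain d where d: "d \<in> {1..m}" "w = pt n e (n - d)" by auto
      then have dn: "n - d < n" "0 < n - d" "d \<le> m" "1 \<le> d" using nm by auto
      have w1: "w \<in> {1..n}" using pt_in[OF assms dn(1)] d(2) by simp
      have o: "off n e w = n - d" using off_pt[OF assms dn(1)] d(2) by simp
      then have ew: "e \<noteq> w" using dn(2) by auto
      have "off n e w + off n w e = n" using off_swap[OF assms w1 ew] .
      then have "off n w e = d" using o dn by simp
      then show "w \<in> Ls e" using dn w1 unfolding Ls_def by simp
    qed
  qed
  moreover have "inj_on (\<lambda>d. pt n e (n - d)) {1..m}"
  proof
    fix d d' assume dd: "d \<in> {1..m}" "d' \<in> {1..m}" "pt n e (n - d) = pt n e (n - d')"
    then have a: "n - d < n" "n - d' < n" using nm by auto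
    have "n - d = n - d'" using off_pt[OF assms a(1)] off_pt[OF assms a(2)] dd(3) by metis
    then show "d = d'" using dd nm by auto
  qed
  ultimately show ?thesis by (simp add: card_image)
qed

lemma N_eq: assumes "e \<in> {1..n}" shows "{w. adj C e w} = Rs e \<union> Ls e"
proof
  show "{w. adj C e w} \<subseteq> Rs e \<union> Ls e"
  proof
    fix w assume "w \<in> {w. adj C e w}"
    then have w: "w \<in> {1..n}" "e \<noteq> w" "off n e w \<le> m \<or> off n w e \<le> m" unfolding adjC_iff by auto
    have "off n e w \<noteq> 0" "off n w e \<noteq> 0" using off_0_iff[OF assms w(1)] off_0_iff[OF w(1) assms] w(2) by auto
    then show "w \<in> Rs e \<union> Ls e" using w unfolding Rs_def Ls_def by auto
  qed
  show "Rs e \<union> Ls e \<subseteq> {w. adj C e w}" using Rs_adj[OF assms] Ls_adj[OF assms] by auto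
qed

lemma first_block: assumes "0 < len" shows "b 0 \<in> EE" "DD (b 0) = {w. adj C (b 0) w}"
proof -
  have p: "0 \<in> Pos (b 0)" using assms unfolding Pos_def by auto
  then have "focc (b 0) = 0" using focc(5)[of "b 0" 0] by auto
  then show "b 0 \<in> EE" "DD (b 0) = {w. adj C (b 0) w}" using p unfolding EE_def DD_def nd_def by auto
qed

lemma card_N: assumes "e \<in> {1..n}" shows "card {w. adj C e w} = 2 * m"
proof -
  have f: "finite (Rs e)" "finite (Ls e)" unfolding Rs_def Ls_def by auto
  have "card (Rs e \<union> Ls e) = card (Rs e) + card (Ls e)"
    using card_Un_disjoint[OF f Rs_Ls_disj[OF assms]] .
  then show ?thesis using N_eq[OF assms] card_Rs[OF assms] card_Ls[OF assms] by simp
qed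

lemma EE_far: assumes "e \<in> EE" "f \<in> EE" "e \<noteq> f" shows "m < off n e f"
proof -
  have "\<not> adj C e f" using EE_indep assms by auto
  moreover have "e \<in> {1..n}" "f \<in> {1..n}" using EE_sub assms by auto
  ultimately show ?thesis using assms(3) unfolding adjC_iff by auto
qed

definition nxt :: "nat \<Rightarrow> nat" where
  "nxt e = (SOME e'. e' \<in> EE \<and> e' \<noteq> e \<and> (\<forall>f\<in>EE. f \<noteq> e \<longrightarrow> off n e e' \<le> off n e f))"

lemma nxt: assumes "e \<in> EE" "2 \<le> card EE"
  shows "nxt e \<in> EE" "nxt e \<noteq> e" "\<And>f. f \<in> EE \<Longrightarrow> f \<noteq> e \<Longrightarrow> off n e (nxt e) \<le> off n e f"
proof -
  have "EE - {e} \<noteq> {}"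
  proof
    assume "EE - {e} = {}"
    then have "EE \<subseteq> {e}" by auto
    then have "card EE \<le> 1" using card_mono[of "{e}" EE] by auto
    then show False using assms by auto
  qed
  then obtain k where k: "k \<in> EE \<and> k \<noteq> e" by auto
  from ex_has_least_nat[of "\<lambda>f. f \<in> EE \<and> f \<noteq> e" k "off n e", OF k]
  have "\<exists>e'. e' \<in> EE \<and> e' \<noteq> e \<and> (\<forall>f\<in>EE. f \<noteq> e \<longrightarrow> off n e e' \<le> off n e f)" by auto
  from someI_ex[OF this] show "nxt e \<in> EE" "nxt e \<noteq> e" "\<And>f. f \<in> EE \<Longrightarrow> f \<noteq> e \<Longrightarrow> off n e (nxt e) \<le> off n e f"
    unfolding nxt_def by auto
qed

lemma gap_EE: assumes "e \<in> EE" "2 \<le> card EE" "v \<in> EE" "0 < off n e v" "off n e v < off n e (nxt e)"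
  shows False
proof -
  have "v \<noteq> e" using assms(4) by auto
  then show False using nxt(3)[OF assms(1,2) assms(3)] assms(5) by auto
qed

lemma gapA: assumes e: "e \<in> EE" and c2: "2 \<le> card EE"
  shows "t < focc e \<Longrightarrow> t < focc (nxt e) \<Longrightarrow> \<not> (0 < off n e (b t) \<and> off n e (b t) < off n e (nxt e))"
proof (induction t rule: less_induct)
  case (less t)
  let ?e' = "nxt e"
  have e': "?e' \<in> EE" "?e' \<noteq> e" using nxt[OF e c2] by auto
  have ein: "e \<in> {1..n}" "?e' \<in> {1..n}" using EE_props e e' by auto
  show ?case
  proof
    assume gap: "0 < off n e (b t) \<and> off n e (b t) < off n e ?e'"
    have tl: "t < len" using less.prems EE_props(1)[OF e] by auto
    have vn: "b t \<notin> EE" using gap_EE[OF e c2] gap by blast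
    obtain t' where t': "t' < t" "adj C (b t') (b t)" using nonEE_nd[OF tl vn] unfolding nd_def by auto
    let ?u = "b t'"
    have uin: "?u \<in> {1..n}" "b t \<in> {1..n}" using b_in tl t'(1) by auto
    have ng: "\<not> (0 < off n e ?u \<and> off n e ?u < off n e ?e')" using less.IH[of t'] t'(1) less.prems by auto
    have ue: "?u \<noteq> e" using EE_props(3)[OF e] t'(1) less.prems by auto
    have ue': "?u \<noteq> ?e'" using EE_props(3)[OF e'(1)] t'(1) less.prems by auto
    have av: "adj C (b t) ?u" using t'(2) adjC_sym[of n m "b t'" "b t"] by simp
    have "adj C ?u e \<or> adj C ?u ?e'"
      apply (rule between[OF ein(1,2) uin(2) uin(1) e'(2)[symmetric], where m = m])
      using gap av ue ue' ng by auto
    then show False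
    proof
      assume "adj C ?u e"
      moreover have "t' < focc e" using t'(1) less.prems by linarith
      ultimately have "nd (focc e) e" unfolding nd_def by blast
      then show False using EE_props(4)[OF e] by auto
    next
      assume "adj C ?u ?e'"
      moreover have "t' < focc ?e'" using t'(1) less.prems by linarith
      ultimately have "nd (focc ?e') ?e'" unfolding nd_def by blast
      then show False using EE_props(4)[OF e'(1)] by auto
    qed
  qed
qed

lemma gap_clean: assumes e: "e \<in> EE" and c2: "2 \<le> card EE"
    and w: "w \<in> {1..n}" "0 < off n e w" "off n e w < off n e (nxt e)"
    and t: "t < focc e" "t < focc (nxt e)" and a: "adj C (b t) w"
  shows False
proof -
  let ?e' = "nxt e"
  have e': "?e' \<in> EE" "?e' \<noteq> e" using nxt[OF e c2] by auto
  have ein: "e \<in> {1..n}" "?e' \<in> {1..n}" using EE_props e e' by auto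
  have tl: "t < len" using t EE_props(1)[OF e] by auto
  let ?u = "b t"
  have uin: "?u \<in> {1..n}" using b_in tl by auto
  have ng: "\<not> (0 < off n e ?u \<and> off n e ?u < off n e ?e')" using gapA[OF e c2 t] .
  have ue: "?u \<noteq> e" using EE_props(3)[OF e] t by auto
  have ue': "?u \<noteq> ?e'" using EE_props(3)[OF e'(1)] t by auto
  have av: "adj C w ?u" using a adjC_sym[of n m "b t" w] by simp
  have "adj C ?u e \<or> adj C ?u ?e'"
    apply (rule between[OF ein(1,2) w(1) uin e'(2)[symmetric], where m = m])
    using w av ue ue' ng by auto
  then show False
  proof
    assume "adj C ?u e"
    then have "nd (focc e) e" unfolding nd_def using t by auto
    then show False using EE_props(4)[OF e] by auto
  next
    assume "adj C ?u ?e'"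
    then have "nd (focc ?e') ?e'" unfolding nd_def using t by auto
    then show False using EE_props(4)[OF e'(1)] by auto
  qed
qed

lemma Rgood: assumes e: "e \<in> EE" and c2: "2 \<le> card EE" and lt: "focc e < focc (nxt e)"
  shows "Rs e \<subseteq> DD e"
proof
  fix w assume w: "w \<in> Rs e"
  have ein: "e \<in> {1..n}" using EE_props e by auto
  have e': "nxt e \<in> EE" "nxt e \<noteq> e" using nxt[OF e c2] by auto
  have far: "m < off n e (nxt e)" using EE_far[OF e e'(1)] e'(2) by auto
  have w1: "w \<in> {1..n}" "0 < off n e w" "off n e w < off n e (nxt e)" using w far unfolding Rs_def by auto
  have "\<not> nd (focc e) w"
  proof
    assume "nd (focc e) w"
    then obtain t where "t < focc e" "adj C (b t) w" unfolding nd_def by auto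
    then show False using gap_clean[OF e c2 w1, of t] lt by auto
  qed
  then show "w \<in> DD e" using Rs_adj[OF ein w] unfolding DD_def by auto
qed

lemma Lgood: assumes e: "e \<in> EE" and c2: "2 \<le> card EE" and lt: "focc (nxt e) < focc e"
  shows "Ls (nxt e) \<subseteq> DD (nxt e)"
proof
  fix w assume w: "w \<in> Ls (nxt e)"
  let ?e' = "nxt e"
  have e': "?e' \<in> EE" "?e' \<noteq> e" using nxt[OF e c2] by auto
  have ein: "e \<in> {1..n}" "?e' \<in> {1..n}" using EE_props e e' by auto
  have far: "m < off n e ?e'" using EE_far[OF e e'(1)] e'(2) by auto
  have wn: "w \<in> {1..n}" "1 \<le> off n w ?e'" "off n w ?e' \<le> m" using w unfolding Ls_def by auto
  have tr: "off n w ?e' = (if off n e w \<le> off n e ?e' then off n e ?e' - off n e w else n + off n e ?e' - off n e w)"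
    using off_trans[OF wn(1) ein(2) ein(1)] .
  have lt1: "off n e w < n" "off n e ?e' < n" using off_lt ein wn by auto
  have nz: "off n e w \<noteq> 0"
  proof
    assume "off n e w = 0"
    then have "w = e" using off_0_iff[OF ein(1) wn(1)] by auto
    then show False using wn(3) far by auto
  qed
  have neq: "off n e w \<noteq> off n e ?e'"
  proof
    assume "off n e w = off n e ?e'"
    then have "w = ?e'" using off_inj[OF wn(1) ein(2) ein(1)] by auto
    then show False using wn(2) by auto
  qed
  have "off n e w < off n e ?e'"
  proof (rule ccontr)
    assume "\<not> off n e w < off n e ?e'"
    then have "off n w ?e' = n + off n e ?e' - off n e w" using tr neq by auto
    then show False using wn(3) far lt1 by linarith
  qed
  then have w1: "w \<in> {1..n}" "0 < off n e w" "off n e w < off n e ?e'" using wn nz by auto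
  have "\<not> nd (focc ?e') w"
  proof
    assume "nd (focc ?e') w"
    then obtain t where "t < focc ?e'" "adj C (b t) w" unfolding nd_def by auto
    then show False using gap_clean[OF e c2 w1, of t] lt by auto
  qed
  then show "w \<in> DD ?e'" using Ls_adj[OF ein(2) w] unfolding DD_def by auto
qed

lemma good: assumes e: "e \<in> EE" and c2: "2 \<le> card EE"
  shows "Rs e \<subseteq> DD e \<or> Ls (nxt e) \<subseteq> DD (nxt e)"
proof -
  have e': "nxt e \<in> EE" "nxt e \<noteq> e" using nxt[OF e c2] by auto
  have ne: "Pos e \<noteq> {}" "Pos (nxt e) \<noteq> {}" using e e' unfolding EE_def by auto
  have "focc e \<noteq> focc (nxt e)" using focc_eq[OF ne] e'(2) by metis
  then consider "focc e < focc (nxt e)" | "focc (nxt e) < focc e" by linarith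
  then show ?thesis using Rgood[OF e c2] Lgood[OF e c2] by cases auto
qed

lemma nxt_inj: assumes c2: "2 \<le> card EE" shows "inj_on nxt EE"
proof
  fix e f assume ef: "e \<in> EE" "f \<in> EE" "nxt e = nxt f"
  show "e = f"
  proof (rule ccontr)
    assume nef: "e \<noteq> f"
    let ?g = "nxt e"
    have g: "?g \<in> EE" "?g \<noteq> e" "?g \<noteq> f" using nxt[OF ef(1) c2] nxt[OF ef(2) c2] ef(3) by auto
    have ein: "e \<in> {1..n}" "f \<in> {1..n}" "?g \<in> {1..n}" using EE_sub ef g by auto
    have h1: "off n e ?g \<le> off n e f" using nxt(3)[OF ef(1) c2 ef(2)] nef by auto
    have h2: "off n f ?g \<le> off n f e" using nxt(3)[OF ef(2) c2 ef(1)] nef ef(3) by auto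
    have tr: "off n f ?g = (if off n e f \<le> off n e ?g then off n e ?g - off n e f else n + off n e ?g - off n e f)"
      using off_trans[OF ein(2) ein(3) ein(1)] .
    have sw: "off n e f + off n f e = n" using off_swap[OF ein(1) ein(2) nef] .
    have nz: "off n e ?g \<noteq> 0" using off_0_iff[OF ein(1) ein(3)] g(2) by auto
    have neq: "off n e ?g \<noteq> off n e f" using off_inj[OF ein(3) ein(2) ein(1)] g(3) by auto
    show False using h1 h2 tr sw nz neq by (auto split: if_splits)
  qed
qed

lemma partB: assumes c2: "2 \<le> card EE" shows "m * card EE \<le> card (\<Union>e\<in>EE. DD e)"
proof -
  define Rg where "Rg = {e \<in> EE. Rs e \<subseteq> DD e}"
  define Lg where "Lg = {e \<in> EE. Ls e \<subseteq> DD e}"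
  have finE: "finite EE" using EE_sub finite_subset by auto
  have "nxt ` (EE - Rg) \<subseteq> Lg" using good nxt c2 unfolding Rg_def Lg_def by auto
  moreover have "inj_on nxt (EE - Rg)" using nxt_inj[OF c2] inj_on_subset by blast
  ultimately have c1: "card (EE - Rg) \<le> card Lg"
    using card_inj_on_le[of nxt "EE - Rg" Lg] finE unfolding Lg_def by auto
  have "card EE = card Rg + card (EE - Rg)"
    using finE card_Diff_subset[of Rg EE] card_mono[of EE Rg] unfolding Rg_def by auto
  then have cE: "card EE \<le> card Rg + card Lg" using c1 by simp
  have finD: "\<And>e. finite (DD e)" using DD_sub finG finite_subset by blast
  have per: "\<And>e. e \<in> EE \<Longrightarrow> m * ((if e \<in> Rg then 1 else 0) + (if e \<in> Lg then 1 else 0)) \<le> card (DD e)"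
  proof -
    fix e assume e: "e \<in> EE"
    have ein: "e \<in> {1..n}" using EE_sub e by auto
    have fR: "finite (Rs e)" "finite (Ls e)" unfolding Rs_def Ls_def by auto
    show "?thesis e"
    proof (cases "e \<in> Rg"; cases "e \<in> Lg")
      assume "e \<in> Rg" "e \<in> Lg"
      then have "Rs e \<union> Ls e \<subseteq> DD e" unfolding Rg_def Lg_def by auto
      then have "card (Rs e \<union> Ls e) \<le> card (DD e)" using card_mono finD by blast
      moreover have "card (Rs e \<union> Ls e) = 2 * m"
        using card_Un_disjoint[OF fR Rs_Ls_disj[OF ein]] card_Rs[OF ein] card_Ls[OF ein] by simp
      ultimately show ?thesis using \<open>e \<in> Rg\<close> \<open>e \<in> Lg\<close> by simp
    next
      assume "e \<in> Rg" "e \<notin> Lg"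
      then show ?thesis using card_mono[OF finD, of "Rs e" e] card_Rs[OF ein] unfolding Rg_def by auto
    next
      assume "e \<notin> Rg" "e \<in> Lg"
      then show ?thesis using card_mono[OF finD, of "Ls e" e] card_Ls[OF ein] unfolding Lg_def by auto
    next
      assume "e \<notin> Rg" "e \<notin> Lg"
      then show ?thesis by simp
    qed
  qed
  have "m * card EE \<le> m * (card Rg + card Lg)" using cE by simp
  also have "\<dots> = (\<Sum>e\<in>EE. m * ((if e \<in> Rg then 1 else 0) + (if e \<in> Lg then 1 else 0)))"
  proof -
    have a: "(\<Sum>e\<in>EE. (if e \<in> Rg then 1 else 0)) = card Rg"
    proof -
      have "{e \<in> EE. e \<in> Rg} = Rg" unfolding Rg_def by auto
      then show ?thesis using sum.inter_filter[OF finE, of "\<lambda>_. 1::nat" "\<lambda>e. e \<in> Rg"] by simp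
    qed
    have b: "(\<Sum>e\<in>EE. (if e \<in> Lg then 1 else 0)) = card Lg"
    proof -
      have "{e \<in> EE. e \<in> Lg} = Lg" unfolding Lg_def by auto
      then show ?thesis using sum.inter_filter[OF finE, of "\<lambda>_. 1::nat" "\<lambda>e. e \<in> Lg"] by simp
    qed
    have "(\<Sum>e\<in>EE. m * ((if e \<in> Rg then 1 else 0) + (if e \<in> Lg then 1 else 0)))
       = m * ((\<Sum>e\<in>EE. (if e \<in> Rg then 1 else 0)) + (\<Sum>e\<in>EE. (if e \<in> Lg then 1 else 0)))"
      by (simp add: sum_distrib_left[symmetric] sum.distrib)
    then show ?thesis using a b by simp
  qed
  also have "\<dots> \<le> (\<Sum>e\<in>EE. card (DD e))" by (rule sum_mono) (rule per)
  also have "\<dots> = card (\<Union>e\<in>EE. DD e)"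
    using card_UN_disjoint[OF finE, of DD] finD DD_disj by auto
  finally show ?thesis .
qed

lemma partB0: assumes "0 < len" shows "2 * m \<le> card (\<Union>e\<in>EE. DD e)"
proof -
  have e: "b 0 \<in> EE" "DD (b 0) = {w. adj C (b 0) w}" using first_block[OF assms] by auto
  have ein: "b 0 \<in> {1..n}" using b_in assms by auto
  have finE: "finite EE" using EE_sub finite_subset by auto
  have fin: "finite (\<Union>e\<in>EE. DD e)" using DD_sub finG finite_subset finE by (metis UN_subset_iff)
  have "DD (b 0) \<subseteq> (\<Union>e\<in>EE. DD e)" using e by auto
  then have "card (DD (b 0)) \<le> card (\<Union>e\<in>EE. DD e)" using card_mono fin by blast
  then show ?thesis using e card_N[OF ein] by simp
qed

end


definition Fm :: "nat \<Rightarrow> nat list \<Rightarrow> nat list" where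
  "Fm m xs = concat (map (\<lambda>(a, b). [a ..< b - m]) (zip xs (tl xs)))"

lemma Fm_Nil[simp]: "Fm m [] = []" unfolding Fm_def by simp
lemma Fm_single[simp]: "Fm m [x] = []" unfolding Fm_def by simp
lemma Fm_cons2[simp]: "Fm m (x # y # zs) = [x ..< y - m] @ Fm m (y # zs)" unfolding Fm_def by simp

lemma sorted_gap_le: "sorted_wrt (\<lambda>x y. x + m < y) (x # (xs::nat list)) \<Longrightarrow> z \<in> set xs \<Longrightarrow> x + m < z"
  by auto

lemma last_ge: "sorted_wrt (\<lambda>x y. x + m < y) (xs::nat list) \<Longrightarrow> z \<in> set xs \<Longrightarrow> z \<le> last xs"
proof (induction xs)
  case Nil then show ?case by simp
next
  case (Cons a xs)
  show ?case
  proof (cases "xs = []")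
    case True
    then have "z = a" "last (a # xs) = a" using Cons.prems(2) by auto
    then show ?thesis by simp
  next
    case False
    then have "last xs \<in> set xs" by simp
    then have "a + m < last xs" using Cons.prems(1) by auto
    moreover have "z \<in> set xs \<Longrightarrow> z \<le> last xs" using Cons.IH Cons.prems(1) by auto
    ultimately show ?thesis using Cons.prems(2) False by auto
  qed
qed

lemma F3: "sorted_wrt (\<lambda>x y. x + m < y) xs \<Longrightarrow> z \<in> set (Fm m xs) \<Longrightarrow> hd xs \<le> z \<and> z + m < last xs"
proof (induction xs rule: induct_list012)
  case 1 then show ?case by simp
next
  case (2 x) then show ?case by simp
next
  case (3 x y zs)
  have s: "sorted_wrt (\<lambda>x y. x + m < y) (y # zs)" using "3.prems"(1) by simp
  have xy: "x + m < y" using "3.prems"(1) by simp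
  have yl: "y \<le> last (y # zs)" using last_ge[OF s] by simp
  show ?case
  proof (cases "z \<in> set [x ..< y - m]")
    case True then show ?thesis using xy yl by auto
  next
    case False
    then have "z \<in> set (Fm m (y # zs))" using "3.prems"(2) by auto
    then show ?thesis using "3.IH"(2)[OF s] xy by auto
  qed
qed

lemma F4: "sorted_wrt (\<lambda>x y. x + m < y) xs \<Longrightarrow> z \<in> set (Fm m xs) \<Longrightarrow> x \<in> set xs \<Longrightarrow> z < x \<Longrightarrow> z + m < x"
proof (induction xs arbitrary: x rule: induct_list012)
  case 1 then show ?case by simp
next
  case (2 x) then show ?case by simp
next
  case (3 u v zs)
  have s: "sorted_wrt (\<lambda>x y. x + m < y) (v # zs)" using "3.prems"(1) by simp
  have uv: "u + m < v" using "3.prems"(1) by simp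
  show ?case
  proof (cases "z \<in> set [u ..< v - m]")
    case True
    then have z: "u \<le> z" "z + m < v" by auto
    have "x \<noteq> u" using "3.prems"(4) z by auto
    then have "x \<in> set (v # zs)" using "3.prems"(3) by auto
    then have "v \<le> x" using "3.prems"(1) by auto
    then show ?thesis using z by auto
  next
    case False
    then have zF: "z \<in> set (Fm m (v # zs))" using "3.prems"(2) by auto
    show ?thesis
    proof (cases "x = u")
      case True
      have "v \<le> z" using F3[OF s zF] by simp
      then show ?thesis using True "3.prems"(4) uv by auto
    next
      case False
      then have "x \<in> set (v # zs)" using "3.prems"(3) by auto
      then show ?thesis using "3.IH"(2)[OF s zF] "3.prems"(4) by blast
    qed
  qed
qed

lemma F5: "sorted_wrt (\<lambda>x y. x + m < y) xs \<Longrightarrow> x \<in> set xs \<Longrightarrow> x \<noteq> last xs \<Longrightarrow> x \<in> set (Fm m xs)"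
proof (induction xs arbitrary: x rule: induct_list012)
  case 1 then show ?case by simp
next
  case (2 x) then show ?case by simp
next
  case (3 u v zs)
  have s: "sorted_wrt (\<lambda>x y. x + m < y) (v # zs)" using "3.prems"(1) by simp
  have uv: "u + m < v" using "3.prems"(1) by simp
  show ?case
  proof (cases "x = u")
    case True then show ?thesis using uv by auto
  next
    case False
    then have "x \<in> set (v # zs)" "x \<noteq> last (v # zs)" using "3.prems" by auto
    then show ?thesis using "3.IH"(2)[OF s] by auto
  qed
qed

lemma F6: "sorted_wrt (\<lambda>x y. x + m < y) xs \<Longrightarrow> xs \<noteq> [] \<Longrightarrow> length (Fm m xs) + m * (length xs - 1) = last xs - hd xs"
proof (induction xs rule: induct_list012)
  case 1 then show ?case by simp
next
  case (2 x) then show ?case by simp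
next
  case (3 u v zs)
  have s: "sorted_wrt (\<lambda>x y. x + m < y) (v # zs)" using "3.prems"(1) by simp
  have uv: "u + m < v" using "3.prems"(1) by simp
  have IH: "length (Fm m (v # zs)) + m * length zs = last (v # zs) - v" using "3.IH"(2)[OF s] by simp
  have yl: "v \<le> last (v # zs)" using last_ge[OF s] by simp
  have "length (Fm m (u # v # zs)) + m * (length (u # v # zs) - 1) = (v - m - u) + length (Fm m (v # zs)) + m * (length zs + 1)"
    by simp
  also have "\<dots> = last (u # v # zs) - u" using IH uv yl by (simp add: algebra_simps)
  finally show ?case by simp
qed

lemma F7: "0 < m \<Longrightarrow> sorted_wrt (\<lambda>x y. x + m < y) xs \<Longrightarrow> xs \<noteq> [] \<Longrightarrow> hd xs \<le> w \<Longrightarrow> w < last xs \<Longrightarrow> w \<notin> set xs \<Longrightarrow>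
    \<exists>y\<in>set (Fm m xs). y < w \<and> w \<le> y + m"
proof (induction xs rule: induct_list012)
  case 1 then show ?case by simp
next
  case (2 x) then show ?case by simp
next
  case (3 u v zs)
  have s: "sorted_wrt (\<lambda>x y. x + m < y) (v # zs)" using "3.prems"(2) by simp
  have uv: "u + m < v" using "3.prems"(2) by simp
  have wu: "u < w" using "3.prems"(4,6) by auto
  show ?case
  proof (cases "w < v")
    case True
    show ?thesis
    proof (cases "w < v - m")
      case True
      then have "w - 1 \<in> set [u ..< v - m]" using wu by auto
      then show ?thesis using wu "3.prems"(1) by (intro bexI[of _ "w - 1"]) auto
    next
      case False
      have "v - m - 1 \<in> set [u ..< v - m]" using uv by auto
      then show ?thesis using False \<open>w < v\<close> uv by (intro bexI[of _ "v - m - 1"]) auto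
    qed
  next
    case False
    then have "v < w" using "3.prems"(6) by auto
    then obtain y where "y \<in> set (Fm m (v # zs))" "y < w \<and> w \<le> y + m"
      using "3.IH"(2)[OF "3.prems"(1) s] "3.prems"(5,6) \<open>v < w\<close> by auto
    then show ?thesis by auto
  qed
qed

lemma F2: "sorted_wrt (\<lambda>x y. x + m < y) xs \<Longrightarrow> sorted_wrt (<) (Fm m xs)"
proof (induction xs rule: induct_list012)
  case 1 then show ?case by simp
next
  case (2 x) then show ?case by simp
next
  case (3 u v zs)
  have s: "sorted_wrt (\<lambda>x y. x + m < y) (v # zs)" using "3.prems"(1) by simp
  have "\<forall>a\<in>set [u ..< v - m]. \<forall>z\<in>set (Fm m (v # zs)). a < z"
  proof (intro ballI)
    fix a z assume "a \<in> set [u ..< v - m]" "z \<in> set (Fm m (v # zs))"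
    then show "a < z" using F3[OF s] by fastforce
  qed
  then show ?case using "3.IH"(2)[OF s] by (simp add: sorted_wrt_append)
qed


lemma nonadj_lin: assumes "x \<in> {1..n}" "y \<in> {1..n}" "x < y" "m < y - x" "m < n + x - y"
  shows "\<not> adj (cycle_pow n m) x y \<and> \<not> adj (cycle_pow n m) y x"
  using assms unfolding adjC_iff off_def by auto

lemma adj_lin: assumes "x \<in> {1..n}" "y \<in> {1..n}" "x < y" "y - x \<le> m"
  shows "adj (cycle_pow n m) x y \<and> adj (cycle_pow n m) y x"
  using assms unfolding adjC_iff off_def by auto

lemma nonadj_base: assumes "e \<in> {1..n}" "x \<in> {1..n}" "y \<in> {1..n}" "off n e x < off n e y"
  "m < off n e y - off n e x" "m < n - (off n e y - off n e x)"
  shows "\<not> adj (cycle_pow n m) x y \<and> \<not> adj (cycle_pow n m) y x \<and> x \<noteq> y"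
proof -
  have t1: "off n x y = off n e y - off n e x" using off_trans[OF assms(2,3,1)] assms(4) by simp
  have t2: "off n y x = n + off n e x - off n e y" using off_trans[OF assms(3,2,1)] assms(4) by simp
  have "x \<noteq> y" using assms(4) by auto
  then show ?thesis using t1 t2 assms(5,6) unfolding adjC_iff by auto
qed

lemma adj_base: assumes "e \<in> {1..n}" "x \<in> {1..n}" "y \<in> {1..n}" "off n e x < off n e y"
  "off n e y - off n e x \<le> m"
  shows "adj (cycle_pow n m) x y \<and> adj (cycle_pow n m) y x"
proof -
  have t1: "off n x y = off n e y - off n e x" using off_trans[OF assms(2,3,1)] assms(4) by simp
  have "x \<noteq> y" using assms(4) by auto
  then show ?thesis using t1 assms(2,3,5) adjC_sym unfolding adjC_iff by auto
qed

lemma privcond_append: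
  assumes "privcond G I X"
    "\<forall>k<length Y. \<exists>w\<in>verts G. (w = Y!k \<or> adj G (Y!k) w) \<and> (Y!k \<in> I \<longrightarrow> w = Y!k)
        \<and> (\<forall>q\<in>set X. w \<noteq> q \<and> \<not> adj G q w) \<and> (\<forall>k'<k. w \<noteq> Y!k' \<and> \<not> adj G (Y!k') w)"
  shows "privcond G I (X @ Y)"
  unfolding privcond_def
proof (intro allI impI)
  fix k assume k: "k < length (X @ Y)"
  show "\<exists>w\<in>verts G. (w = (X @ Y) ! k \<or> adj G ((X @ Y) ! k) w) \<and> ((X @ Y) ! k \<in> I \<longrightarrow> w = (X @ Y) ! k) \<and>
             (\<forall>k'<k. w \<noteq> (X @ Y) ! k' \<and> \<not> adj G ((X @ Y) ! k') w)"
  proof (cases "k < length X")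
    case True
    then obtain w where w: "w \<in> verts G" "(w = X ! k \<or> adj G (X ! k) w)" "(X ! k \<in> I \<longrightarrow> w = X ! k)"
      "\<forall>k'<k. w \<noteq> X ! k' \<and> \<not> adj G (X ! k') w"
      using assms(1) unfolding privcond_def by blast
    have "\<forall>k'<k. (X @ Y) ! k' = X ! k'" using True by (auto simp: nth_append)
    then show ?thesis using w True by (auto simp: nth_append)
  next
    case False
    define k0 where "k0 = k - length X"
    have k0: "k = length X + k0" "k0 < length Y" using False k unfolding k0_def by auto
    obtain w where w: "w \<in> verts G" "(w = Y ! k0 \<or> adj G (Y ! k0) w)" "(Y ! k0 \<in> I \<longrightarrow> w = Y ! k0)"
      "\<forall>q\<in>set X. w \<noteq> q \<and> \<not> adj G q w" "\<forall>k'<k0. w \<noteq> Y ! k' \<and> \<not> adj G (Y ! k') w"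
      using assms(2) k0(2) by blast
    have e: "(X @ Y) ! k = Y ! k0" using k0 by (simp add: nth_append)
    have "\<forall>k'<k. w \<noteq> (X @ Y) ! k' \<and> \<not> adj G ((X @ Y) ! k') w"
    proof (intro allI impI)
      fix k' assume k': "k' < k"
      show "w \<noteq> (X @ Y) ! k' \<and> \<not> adj G ((X @ Y) ! k') w"
      proof (cases "k' < length X")
        case True
        then have "(X @ Y) ! k' \<in> set X" by (simp add: nth_append)
        then show ?thesis using w(4) by blast
      next
        case False
        then have "(X @ Y) ! k' = Y ! (k' - length X)" "k' - length X < k0" using k' k0 by (auto simp: nth_append)
        then show ?thesis using w(5) by metis
      qed
    qed
    then show ?thesis using w e by auto
  qed
qed

locale scI =
  fixes n m :: nat and I :: "nat set"
  assumes m1: "1 \<le> m" and nm: "2 * (m + 1) \<le> n" and I2: "I \<in> I2 n m"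
begin

abbreviation "C \<equiv> cycle_pow n m"
definition "is = sorted_list_of_set I"
definition "a = hd is"
definition "ip = last is"
definition "Lo = n + a - ip"
definition "L = n + a - ip - (m + 1)"
definition "A = Fm m is"
definition "g j = pt n ip (m + 1 + j)"
definition "Bz = rev (map g [0..<L])"

lemma Iprops: "finite I" "I \<subseteq> {1..n}" "2 \<le> card I" "\<And>u v. u \<in> I \<Longrightarrow> v \<in> I \<Longrightarrow> \<not> adj C u v"
  using I2 unfolding I2_def indep_set_def by (auto intro: card_ge_0_finite)

lemma indep_off: "u \<in> I \<Longrightarrow> v \<in> I \<Longrightarrow> u \<noteq> v \<Longrightarrow> m < off n u v"
  using Iprops(2,4) unfolding adjC_iff by fastforce

lemma is_props: "sorted_wrt (<) is" "set is = I" "distinct is" "length is = card I" "is \<noteq> []"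
  unfolding is_def using Iprops(1,3) by auto

lemma is_gap: "sorted_wrt (\<lambda>x y. x + m < y) is"
proof (rule sorted_wrt_mono_rel[OF _ is_props(1)])
  fix x y assume xy: "x \<in> set is" "y \<in> set is" "x < y"
  then have "m < off n x y" using indep_off is_props(2) by auto
  then show "x + m < y" using xy unfolding off_def by auto
qed

lemma a_ip: "a \<in> I" "ip \<in> I" "\<And>u. u \<in> I \<Longrightarrow> a \<le> u" "\<And>u. u \<in> I \<Longrightarrow> u \<le> ip" "a < ip"
proof -
  show aI: "a \<in> I" "ip \<in> I" unfolding a_def ip_def using is_props(2,5) hd_in_set last_in_set by blast+
  obtain x xs where xxs: "is = x # xs" using is_props(5) by (cases "is") auto
  have xlt: "\<forall>y\<in>set xs. x < y" using is_props(1) xxs by simp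
  show le1: "\<And>u. u \<in> I \<Longrightarrow> a \<le> u"
  proof -
    fix u assume u: "u \<in> I"
    then have "u = x \<or> u \<in> set xs" using is_props(2) xxs by auto
    then show "a \<le> u" using xlt unfolding a_def xxs by auto
  qed
  show le2: "\<And>u. u \<in> I \<Longrightarrow> u \<le> ip"
  proof -
    fix u assume "u \<in> I"
    then have "u \<in> set is" using is_props(2) by simp
    then show "u \<le> ip" unfolding ip_def by (rule last_ge[OF is_gap])
  qed
  have "\<not> I \<subseteq> {a}"
  proof
    assume "I \<subseteq> {a}"
    then have "card I \<le> card {a}" by (intro card_mono) auto
    then show False using Iprops(3) by simp
  qed
  then obtain u where u: "u \<in> I" "u \<noteq> a" by auto
  then show "a < ip" using le1[OF u(1)] le2[OF u(1)] by auto
qed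

lemma I_range: "\<And>u. u \<in> I \<Longrightarrow> u \<in> {1..n}" using Iprops(2) by auto

lemma Lo_props: "m < Lo" "Lo < n" "L + m + 1 = Lo" "m < ip - a"
proof -
  have "m < off n ip a" using indep_off a_ip by auto
  then show "m < Lo" unfolding Lo_def off_def using a_ip by auto
  show "Lo < n" unfolding Lo_def using a_ip I_range[of ip] by auto
  then show "L + m + 1 = Lo" unfolding L_def Lo_def using \<open>m < Lo\<close> unfolding Lo_def by auto
  have "m < off n a ip" using indep_off a_ip by auto
  then show "m < ip - a" unfolding off_def using a_ip by auto
qed

lemma ipn: "ip \<in> {1..n}" "a \<in> {1..n}" using I_range a_ip by auto

lemma g_props: assumes "j < L" shows "g j \<in> {1..n}" "off n ip (g j) = m + 1 + j"
proof -
  have "m + 1 + j < n" using assms Lo_props by auto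
  then show "g j \<in> {1..n}" "off n ip (g j) = m + 1 + j" unfolding g_def using pt_in off_pt ipn by auto
qed

lemma SC_eq: "S_C n m I = A @ Bz @ [ip]"
proof -
  have "map (\<lambda>k. (ip + m + k) mod n + 1) [0..<L] = map g [0..<L]"
  proof (rule map_cong[OF refl])
    fix k assume "k \<in> set [0..<L]"
    then have k: "k < L" by auto
    then have k2: "ip + m + k < 2 * n" using Lo_props ipn unfolding Lo_def by auto
    show "(ip + m + k) mod n + 1 = g k"
    proof (cases "ip + m + k < n")
      case True
      then show ?thesis unfolding g_def pt_def by auto
    next
      case False
      then have "(ip + m + k) mod n = ip + m + k - n" using k2 by (simp add: mod_if)
      then show ?thesis using False k2 unfolding g_def pt_def by auto
    qed
  qed
  then show ?thesis unfolding S_C_def Let_def A_def Fm_def Bz_def L_def a_def ip_def is_def by simp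
qed

lemma A_props:
  shows "sorted_wrt (<) A" "distinct A"
    "\<And>y. y \<in> set A \<Longrightarrow> a \<le> y \<and> y + m < ip"
    "\<And>y. y \<in> set A \<Longrightarrow> y \<in> {1..n}"
    "\<And>y. y \<in> set A \<Longrightarrow> off n ip y = y + n - ip \<and> Lo \<le> off n ip y \<and> off n ip y + m < n"
    "\<And>y x. y \<in> set A \<Longrightarrow> x \<in> I \<Longrightarrow> y < x \<Longrightarrow> y + m < x"
    "I \<subseteq> insert ip (set A)"
    "length A + m * (card I - 1) = ip - a"
proof -
  show s: "sorted_wrt (<) A" unfolding A_def using F2[OF is_gap] .
  then show "distinct A" by (simp add: strict_sorted_iff)
  show r: "\<And>y. y \<in> set A \<Longrightarrow> a \<le> y \<and> y + m < ip"
    using F3[OF is_gap] unfolding A_def a_def ip_def by blast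
  show "\<And>y. y \<in> set A \<Longrightarrow> y \<in> {1..n}"
  proof -
    fix y assume "y \<in> set A"
    then show "y \<in> {1..n}" using r[of y] ipn by auto
  qed
  show "\<And>y. y \<in> set A \<Longrightarrow> off n ip y = y + n - ip \<and> Lo \<le> off n ip y \<and> off n ip y + m < n"
  proof -
    fix y assume "y \<in> set A"
    then have y: "a \<le> y" "y + m < ip" using r by auto
    then have "\<not> ip \<le> y" by simp
    then have o: "off n ip y = y + n - ip" unfolding off_def by simp
    have "ip \<le> n" using ipn by simp
    then show "off n ip y = y + n - ip \<and> Lo \<le> off n ip y \<and> off n ip y + m < n"
      using o y unfolding Lo_def by linarith
  qed
  show "\<And>y x. y \<in> set A \<Longrightarrow> x \<in> I \<Longrightarrow> y < x \<Longrightarrow> y + m < x"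
    using F4[OF is_gap] is_props(2) unfolding A_def by blast
  show "I \<subseteq> insert ip (set A)"
    using F5[OF is_gap] is_props(2) unfolding A_def ip_def by blast
  show "length A + m * (card I - 1) = ip - a"
    using F6[OF is_gap is_props(5)] is_props(4) unfolding A_def ip_def a_def by simp
qed

lemma Bz_props:
  shows "length Bz = L" "\<And>k. k < L \<Longrightarrow> Bz ! k = g (L - 1 - k)" "set Bz = g ` {..<L}" "distinct Bz"
proof -
  show "length Bz = L" unfolding Bz_def by simp
  show "\<And>k. k < L \<Longrightarrow> Bz ! k = g (L - 1 - k)"
  proof -
    fix k assume k: "k < L"
    have "Bz ! k = map g [0..<L] ! (length (map g [0..<L]) - Suc k)"
      unfolding Bz_def using k by (simp only: rev_nth length_map length_upt)
    also have "\<dots> = g (L - 1 - k)" using k by simp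
    finally show "Bz ! k = g (L - 1 - k)" .
  qed
  show "set Bz = g ` {..<L}" unfolding Bz_def by (simp only: set_rev set_map set_upt atLeast0LessThan)
  have "inj_on g {..<L}"
  proof (rule inj_onI)
    fix j j' assume jj: "j \<in> {..<L}" "j' \<in> {..<L}" "g j = g j'"
    then have jl: "j < L" "j' < L" by auto
    have e1: "off n ip (g j) = m + 1 + j" by (rule g_props(2)[OF jl(1)])
    have e2: "off n ip (g j') = m + 1 + j'" by (rule g_props(2)[OF jl(2)])
    have "off n ip (g j) = off n ip (g j')" using jj(3) by (rule arg_cong)
    then show "j = j'" using e1 e2 by linarith
  qed
  then show "distinct Bz" unfolding Bz_def
    by (simp only: distinct_rev distinct_map distinct_upt set_upt atLeast0LessThan simp_thms)
qed

lemma I_off: "x \<in> I \<Longrightarrow> x \<noteq> ip \<Longrightarrow> Lo \<le> off n ip x"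
  using a_ip(3,4)[of x] unfolding off_def Lo_def by auto

lemma Q_distinct: "distinct (A @ Bz @ [ip])"
proof -
  have d1: "set A \<inter> set Bz = {}"
  proof -
    { fix y assume y: "y \<in> set A" "y \<in> set Bz"
      then obtain j where j: "j < L" "y = g j" using Bz_props(3) by auto
      have "off n ip y = m + 1 + j" using g_props(2)[OF j(1)] j(2) by simp
      moreover have "Lo \<le> off n ip y" using A_props(5)[OF y(1)] by simp
      ultimately have False using j(1) Lo_props(3) by simp }
    then show ?thesis by auto
  qed
  have d2: "ip \<notin> set A" using A_props(3) by fastforce
  have d3: "ip \<notin> set Bz"
  proof
    assume "ip \<in> set Bz"
    then obtain j where j: "j < L" "ip = g j" using Bz_props(3) by auto
    then show False using g_props(2)[OF j(1)] by simp
  qed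
  show ?thesis using A_props(2) Bz_props(4) d1 d2 d3 by auto
qed

lemma Q_sub: "set (A @ Bz @ [ip]) \<subseteq> {1..n}"
  using A_props(4) Bz_props(3) g_props(1) ipn by auto

lemma Q_I: "I \<subseteq> set (A @ Bz @ [ip])"
  using A_props(7) by auto

lemma Q_len: "length (A @ Bz @ [ip]) + m * card I = n"
proof -
  have c: "card I = Suc (card I - 1)" using Iprops(3) by simp
  have "length (A @ Bz @ [ip]) = length A + L + 1" using Bz_props(1) by simp
  moreover have "length A + m * (card I - 1) = ip - a" by (rule A_props(8))
  moreover have "L + m + 1 = Lo" by (rule Lo_props(3))
  moreover have "Lo = n + a - ip" unfolding Lo_def ..
  moreover have "a < ip" "ip \<le> n" using a_ip ipn by auto
  moreover have "m * card I = m * (card I - 1) + m" using c by (metis mult_Suc_right add.commute)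
  ultimately show ?thesis by linarith
qed

lemma privA: "privcond C I A"
  unfolding privcond_def
proof (intro allI impI)
  fix k assume k: "k < length A"
  let ?q = "A ! k"
  have qA: "?q \<in> set A" using k by simp
  have qr: "a \<le> ?q" "?q + m < ip" "?q \<in> {1..n}" using A_props(3,4)[OF qA] by auto
  have ipn': "ip \<le> n" using ipn by simp
  have Lo': "m < n + a - ip" using Lo_props(1) unfolding Lo_def .
  have earlier: "\<And>k'. k' < k \<Longrightarrow> A ! k' \<in> set A \<and> A ! k' < ?q"
    using sorted_wrt_nth_less[OF A_props(1)] k by auto
  show "\<exists>w\<in>verts C. (w = ?q \<or> adj C ?q w) \<and> (?q \<in> I \<longrightarrow> w = ?q) \<and> (\<forall>k'<k. w \<noteq> A ! k' \<and> \<not> adj C (A ! k') w)"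
  proof (cases "?q \<in> I")
    case True
    have "\<forall>k'<k. ?q \<noteq> A ! k' \<and> \<not> adj C (A ! k') ?q"
    proof (intro allI impI)
      fix k' assume k': "k' < k"
      let ?y = "A ! k'"
      have y: "?y \<in> set A" "?y < ?q" using earlier[OF k'] by auto
      have yr: "a \<le> ?y" "?y \<in> {1..n}" using A_props(3,4)[OF y(1)] by auto
      have "?y + m < ?q" using A_props(6)[OF y(1) True y(2)] .
      then have "\<not> adj C ?y ?q \<and> \<not> adj C ?q ?y"
        using nonadj_lin[where m=m, OF yr(2) qr(3) y(2)] yr(1) qr(2) Lo' by linarith
      then show "?q \<noteq> ?y \<and> \<not> adj C ?y ?q" using y(2) by auto
    qed
    then show ?thesis using qr(3) True by auto
  next
    case False
    let ?w = "?q + m"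
    have wn: "?w \<in> {1..n}" using qr ipn' by auto
    have aw: "adj C ?q ?w" using adj_lin[where m=m, OF qr(3) wn] m1 by auto
    have "\<forall>k'<k. ?w \<noteq> A ! k' \<and> \<not> adj C (A ! k') ?w"
    proof (intro allI impI)
      fix k' assume k': "k' < k"
      let ?y = "A ! k'"
      have y: "?y \<in> set A" "?y < ?q" using earlier[OF k'] by auto
      have yr: "a \<le> ?y" "?y \<in> {1..n}" using A_props(3,4)[OF y(1)] by auto
      have yw: "?y < ?w" using y(2) by simp
      have "\<not> adj C ?y ?w \<and> \<not> adj C ?w ?y"
        using nonadj_lin[where m=m, OF yr(2) wn yw] y(2) yr(1) qr(2) Lo' by linarith
      then show "?w \<noteq> ?y \<and> \<not> adj C ?y ?w" using yw by auto
    qed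
    then show ?thesis using wn aw False by auto
  qed
qed

lemma privAB: "privcond C I (A @ Bz)"
proof (rule privcond_append[OF privA], intro allI impI)
  fix k assume k: "k < length Bz"
  then have kL: "k < L" using Bz_props(1) by simp
  define kk where "kk = L - 1 - k"
  have kk: "kk < L" "Bz ! k = g kk" using kL Bz_props(2)[OF kL] unfolding kk_def by auto
  let ?q = "Bz ! k"
  have qn: "?q \<in> {1..n}" "off n ip ?q = m + 1 + kk" using g_props[OF kk(1)] kk(2) by auto
  have LL: "L + m + 1 = Lo" "Lo < n" "m < Lo" "m < ip - a" using Lo_props by auto
  have Lo2: "Lo + (ip - a) = n" using a_ip(5) ipn unfolding Lo_def by auto
  define w where "w = pt n ip (kk + 1)"
  have kn: "kk + 1 < n" using kk LL by linarith
  have wn: "w \<in> {1..n}" "off n ip w = kk + 1" unfolding w_def using pt_in[OF ipn(1) kn] off_pt[OF ipn(1) kn] by auto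
  have qI: "?q \<notin> I"
  proof
    assume qI: "?q \<in> I"
    show False
    proof (cases "?q = ip")
      case True then show False using qn(2) by simp
    next
      case False then show False using I_off[OF qI] qn(2) kk(1) LL by linarith
    qed
  qed
  have aw: "adj C ?q w"
    using adj_base[where m=m, OF ipn(1) wn(1) qn(1)] wn(2) qn(2) m1 by simp
  have c1: "\<forall>y\<in>set A. w \<noteq> y \<and> \<not> adj C y w"
  proof
    fix y assume y: "y \<in> set A"
    have yr: "y \<in> {1..n}" "Lo \<le> off n ip y" "off n ip y + m < n" using A_props(4,5)[OF y] by auto
    have "\<not> adj C w y \<and> \<not> adj C y w \<and> w \<noteq> y"
      by (rule nonadj_base[where m=m, OF ipn(1) wn(1) yr(1)]) (use wn(2) yr kk(1) LL in linarith)+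
    then show "w \<noteq> y \<and> \<not> adj C y w" by auto
  qed
  have c2: "\<forall>k'<k. w \<noteq> Bz ! k' \<and> \<not> adj C (Bz ! k') w"
  proof (intro allI impI)
    fix k' assume k': "k' < k"
    define j where "j = L - 1 - k'"
    have j: "j < L" "Bz ! k' = g j" "kk < j" using k' kL Bz_props(2)[of k'] unfolding j_def kk_def by auto
    have gj: "g j \<in> {1..n}" "off n ip (g j) = m + 1 + j" using g_props[OF j(1)] by auto
    have "\<not> adj C w (g j) \<and> \<not> adj C (g j) w \<and> w \<noteq> g j"
      by (rule nonadj_base[where m=m, OF ipn(1) wn(1) gj(1)]) (use wn(2) gj(2) j LL Lo2 in linarith)+
    then show "w \<noteq> Bz ! k' \<and> \<not> adj C (Bz ! k') w" using j(2) by auto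
  qed
  show "\<exists>w\<in>verts C. (w = Bz ! k \<or> adj C (Bz ! k) w) \<and> (Bz ! k \<in> I \<longrightarrow> w = Bz ! k) \<and>
           (\<forall>q\<in>set A. w \<noteq> q \<and> \<not> adj C q w) \<and> (\<forall>k'<k. w \<noteq> Bz ! k' \<and> \<not> adj C (Bz ! k') w)"
    using wn(1) aw qI c1 c2 by auto
qed

lemma privQ: "privcond C I (A @ Bz @ [ip])"
proof -
  have LL: "L + m + 1 = Lo" "Lo < n" "m < Lo" "m < ip - a" using Lo_props by auto
  have Lo2: "Lo + (ip - a) = n" using a_ip(5) ipn unfolding Lo_def by auto
  have c: "\<forall>y\<in>set (A @ Bz). ip \<noteq> y \<and> \<not> adj C y ip"
  proof
    fix y assume "y \<in> set (A @ Bz)"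
    then consider (A) "y \<in> set A" | (B) "y \<in> set Bz" by auto
    then show "ip \<noteq> y \<and> \<not> adj C y ip"
    proof cases
      case A
      have yr: "y \<in> {1..n}" "Lo \<le> off n ip y" "off n ip y + m < n" using A_props(4,5)[OF A] by auto
      have "\<not> adj C ip y \<and> \<not> adj C y ip \<and> ip \<noteq> y"
        by (rule nonadj_base[where m=m, OF ipn(1) ipn(1) yr(1)]) (use yr LL in auto)
      then show ?thesis by auto
    next
      case B
      then obtain j where j: "j < L" "y = g j" using Bz_props(3) by auto
      have gj: "g j \<in> {1..n}" "off n ip (g j) = m + 1 + j" using g_props[OF j(1)] by auto
      have "\<not> adj C ip y \<and> \<not> adj C y ip \<and> ip \<noteq> y"
        by (rule nonadj_base[where m=m, OF ipn(1) ipn(1) gj(1)[folded j(2)]]) (use gj j LL Lo2 in auto)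
      then show ?thesis by auto
    qed
  qed
  have "privcond C I ((A @ Bz) @ [ip])"
  proof (rule privcond_append[OF privAB], intro allI impI)
    fix k assume "k < length [ip]"
    then have k: "k = 0" by simp
    show "\<exists>w\<in>verts C. (w = [ip] ! k \<or> adj C ([ip] ! k) w) \<and> ([ip] ! k \<in> I \<longrightarrow> w = [ip] ! k) \<and>
           (\<forall>q\<in>set (A @ Bz). w \<noteq> q \<and> \<not> adj C q w) \<and> (\<forall>k'<k. w \<noteq> [ip] ! k' \<and> \<not> adj C ([ip] ! k') w)"
      using c k ipn(1) by (intro bexI[of _ ip]) auto
  qed
  then show ?thesis by simp
qed

lemma coverQ: "\<forall>w\<in>{1..n} - I. \<exists>q\<in>set (A @ Bz @ [ip]). adj C q w"
proof
  fix w assume w: "w \<in> {1..n} - I"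
  have wn: "w \<in> {1..n}" "w \<noteq> ip" using w a_ip(2) by auto
  let ?r = "off n ip w"
  have r0: "?r \<noteq> 0" "?r < n" using off_0_iff[OF ipn(1) wn(1)] wn(2) off_lt[OF ipn(1) wn(1)] by auto
  have LL: "L + m + 1 = Lo" "Lo < n" "m < Lo" "m < ip - a" using Lo_props by auto
  consider (a) "?r \<le> m" | (b) "m < ?r" "?r + 1 < Lo" | (c) "?r + 1 = Lo" | (d) "Lo \<le> ?r" by linarith
  then show "\<exists>q\<in>set (A @ Bz @ [ip]). adj C q w"
  proof cases
    case a
    have "adj C ip w" using adj_base[where m=m, OF ipn(1) ipn(1) wn(1)] a r0 by simp
    then show ?thesis by auto
  next
    case b
    define j where "j = ?r - m"
    have j: "j < L" using b LL unfolding j_def by linarith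
    have gj: "g j \<in> {1..n}" "off n ip (g j) = ?r + 1" using g_props[OF j] b unfolding j_def by auto
    have "adj C w (g j) \<and> adj C (g j) w" using adj_base[where m=m, OF ipn(1) wn(1) gj(1)] gj(2) m1 by simp
    moreover have "g j \<in> set Bz" using Bz_props(3) j by auto
    ultimately show ?thesis by auto
  next
    case c
    have aA: "a \<in> set A" using A_props(7) a_ip(1,5) by auto
    have "off n ip a = Lo" unfolding off_def Lo_def using a_ip(5) by auto
    then have "adj C w a \<and> adj C a w" using adj_base[where m=m, OF ipn(1) wn(1) ipn(2)] c m1 by simp
    then show ?thesis using aA by auto
  next
    case d
    have wip: "w < ip"
    proof (rule ccontr)
      assume "\<not> w < ip"
      then have "?r = w - ip" unfolding off_def by simp
      moreover have "w \<le> n" "1 \<le> a" using wn(1) ipn(2) by auto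
      ultimately show False using d \<open>\<not> w < ip\<close> unfolding Lo_def by linarith
    qed
    then have "?r = w + n - ip" unfolding off_def by simp
    moreover have "ip \<le> n" using ipn(1) by simp
    ultimately have wa: "a \<le> w" using d wip unfolding Lo_def by linarith
    have "w \<notin> set is" using w is_props(2) by auto
    then obtain y where y: "y \<in> set A" "y < w" "w \<le> y + m"
      using F7[of m "is" w] m1 is_gap is_props(5) wa wip unfolding A_def a_def ip_def by auto
    have "adj C y w \<and> adj C w y" using adj_lin[where m=m, OF A_props(4)[OF y(1)] wn(1) y(2)] y(3) by simp
    then show ?thesis using y(1) by auto
  qed
qed

end


lemma graph_facts: "graph G \<Longrightarrow> finite (verts G) \<and> verts G \<noteq> {}"
  unfolding graph_def by auto

lemma grR: "\<forall>i \<in> {1..n}. graph (R i) \<Longrightarrow> v \<in> {1..n} \<Longrightarrow> finite (verts (R v)) \<and> verts (R v) \<noteq> {}"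
  using graph_facts by blast

lemma gamma_pos: assumes "graph G" shows "1 \<le> gamma_gr G"
proof -
  obtain S where S: "legal_dom_seq G S" "length S = gamma_gr G" using gamma_attained graph_facts[OF assms] by blast
  have "S \<noteq> []"
  proof
    assume "S = []"
    then show False using S(1) graph_facts[OF assms] unfolding legal_dom_seq_def dominating_def by auto
  qed
  then show ?thesis using S(2) by (cases S) auto
qed

lemma verts_H: "verts (xjoin G R) = Sigma (verts G) (\<lambda>v. verts (R v))"
  unfolding xjoin_def by auto

lemma I2_pair: assumes "1 \<le> m" "2 * (m + 1) \<le> n" "e \<in> {1..n}"
  shows "{e, pt n e (m + 1)} \<in> I2 n m"
proof -
  let ?j = "pt n e (m + 1)"
  have mn: "m + 1 < n" using assms by auto
  have j: "?j \<in> {1..n}" "off n e ?j = m + 1" using pt_in[OF assms(3) mn] off_pt[OF assms(3) mn] by auto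
  have ne: "e \<noteq> ?j" using j(2) by auto
  have sw: "off n e ?j + off n ?j e = n" using off_swap[OF assms(3) j(1) ne] .
  have na: "\<not> adj (cycle_pow n m) e ?j" "\<not> adj (cycle_pow n m) ?j e"
    using j sw assms unfolding adjC_iff by auto
  have "indep_set (cycle_pow n m) {e, ?j}"
    unfolding indep_set_def using na assms(3) j(1) adjC_irrefl by auto
  moreover have "card {e, ?j} = 2" using ne by simp
  ultimately show ?thesis unfolding I2_def by auto
qed

lemma I2_fin: "finite (I2 n m)"
proof -
  have "I2 n m \<subseteq> Pow {1..n}" unfolding I2_def indep_set_def by auto
  then show ?thesis using finite_subset by blast
qed

lemma expand_SC:
  fixes R :: "nat \<Rightarrow> 'a sgraph"
  assumes m1: "1 \<le> m" and nm: "2 * (m + 1) \<le> n" and I: "I \<in> I2 n m"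
    and gr: "\<forall>i \<in> {1..n}. graph (R i)"
    and seqs: "\<forall>j\<in>I. legal_dom_seq (R j) (seqs j)"
    and cv: "\<forall>j\<in>{1..n}. c j \<in> verts (R j)"
  shows "legal_dom_seq (xjoin (cycle_pow n m) R) (expand_seq I seqs c (S_C n m I))"
    "length (expand_seq I seqs c (S_C n m I)) + (m + 1) * card I = (\<Sum>j\<in>I. length (seqs j)) + n"
proof -
  interpret scI n m I using m1 nm I by unfold_locales
  let ?Q = "A @ Bz @ [ip]"
  have ne: "\<forall>j\<in>verts (cycle_pow n m). verts (R j) \<noteq> {}" using grR[OF gr] by simp
  have irr: "\<forall>v. \<not> adj (cycle_pow n m) v v" by simp
  show "legal_dom_seq (xjoin (cycle_pow n m) R) (expand_seq I seqs c (S_C n m I))"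
    unfolding SC_eq
    by (rule expand_legal_dom[OF seqs _ ne irr Q_distinct _ Q_I privQ]) (use cv Q_sub coverQ in auto)
  have l: "length (expand_seq I seqs c ?Q) = (\<Sum>j\<in>I. length (seqs j)) + card (set ?Q - I)"
    using length_expand[OF Q_distinct Q_I] .
  have "card (set ?Q - I) = length ?Q - card I"
    using card_Diff_subset[OF _ Q_I] Iprops(1) distinct_card[OF Q_distinct] by (metis finite_subset Q_I)
  moreover have "card I \<le> length ?Q"
    using card_mono[OF _ Q_I] distinct_card[OF Q_distinct] by (metis List.finite_set)
  ultimately show "length (expand_seq I seqs c (S_C n m I)) + (m + 1) * card I = (\<Sum>j\<in>I. length (seqs j)) + n"
    unfolding SC_eq using l Q_len by (simp add: algebra_simps)
qed

definition valI :: "(nat \<Rightarrow> 'a sgraph) \<Rightarrow> nat \<Rightarrow> nat set \<Rightarrow> int" where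
  "valI R m I = (\<Sum>i\<in>I. int (gamma_gr (R i))) - int (card I) * int (m + 1)"

lemma V_fin: "finite {valI R m I | I. I \<in> I2 n m}"
  using I2_fin by simp

lemma V_le: "I \<in> I2 n m \<Longrightarrow> valI R m I \<le> Max {valI R m I | I. I \<in> I2 n m}"
  using V_fin by (intro Max_ge) auto

lemma upper:
  fixes R :: "nat \<Rightarrow> 'a sgraph"
  assumes m1: "1 \<le> m" and nm: "2 * (m + 1) \<le> n"
    and gr: "\<forall>i \<in> {1..n}. graph (R i)"
    and S: "legal_dom_seq (xjoin (cycle_pow n m) R) S"
  shows "int (length S) \<le> Max {valI R m I | I. I \<in> I2 n m} + int n"
proof -
  interpret cjseq n m R S
  proof (unfold_locales)
    show "\<And>u v. adj (cycle_pow n m) u v \<Longrightarrow> adj (cycle_pow n m) v u" using adjC_sym by blast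
    show "\<And>v. \<not> adj (cycle_pow n m) v v" by simp
    show "\<And>u v. adj (cycle_pow n m) u v \<Longrightarrow> u \<in> verts (cycle_pow n m) \<and> v \<in> verts (cycle_pow n m)"
      unfolding adjC_iff by simp
    show "finite (verts (cycle_pow n m))" by simp
    show "\<And>v. v \<in> verts (cycle_pow n m) \<Longrightarrow> finite (verts (R v))" using grR[OF gr] by simp
    show "legal_dom_seq (xjoin (cycle_pow n m) R) S" by (rule S)
    show "1 \<le> m" "2 * (m + 1) \<le> n" using m1 nm by auto
  qed
  let ?M = "Max {valI R m I | I. I \<in> I2 n m}"
  let ?D = "\<Union>e\<in>EE. DD e"
  have mc: "len + card EE + card ?D \<le> (\<Sum>e\<in>EE. gamma_gr (R e)) + n"
    using main_count by simp
  have n1: "1 \<in> {1..n}" using nm by auto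
  obtain y where y: "y \<in> verts (R 1)" using grR[OF gr n1] by blast
  have lpos: "0 < len"
  proof (rule ccontr)
    assume "\<not> 0 < len"
    then have "S = []" by simp
    moreover have "(1, y) \<in> verts (xjoin (cycle_pow n m) R)" using verts_xjoin[of 1 y "cycle_pow n m" R] n1 y by simp
    ultimately show False using S unfolding legal_dom_seq_def dominating_def by auto
  qed
  have finE: "finite EE" using EE_sub finite_subset by auto
  have e0: "b 0 \<in> EE" using first_block[OF lpos] by simp
  have sum_int: "(\<Sum>e\<in>EE. int (gamma_gr (R e))) = int (\<Sum>e\<in>EE. gamma_gr (R e))" by simp
  show ?thesis
  proof (cases "2 \<le> card EE")
    case True
    have pb: "m * card EE \<le> card ?D" using partB[OF True] .
    have "EE \<in> I2 n m"
      unfolding I2_def indep_set_def using EE_sub EE_indep True by auto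
    then have le: "valI R m EE \<le> ?M" by (rule V_le)
    have nat1: "len + card EE * (m + 1) \<le> (\<Sum>e\<in>EE. gamma_gr (R e)) + n" using mc pb by (simp add: algebra_simps)
    then have "int (len + card EE * (m + 1)) \<le> int ((\<Sum>e\<in>EE. gamma_gr (R e)) + n)" by (simp only: of_nat_le_iff)
    then have "int len \<le> valI R m EE + int n"
      unfolding valI_def sum_int by (simp add: algebra_simps)
    then show ?thesis using le by linarith
  next
    case False
    have "card EE \<noteq> 0" using finE e0 by auto
    then have "card EE = 1" using False by auto
    then obtain e where e: "EE = {e}" using card_1_singletonE by blast
    have ein: "e \<in> {1..n}" using EE_sub e by auto
    have pb: "2 * m \<le> card ?D" using partB0[OF lpos] .
    let ?J = "{e, pt n e (m + 1)}"
    have J: "?J \<in> I2 n m" using I2_pair[OF m1 nm ein] .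
    have ne: "e \<noteq> pt n e (m + 1)" using J unfolding I2_def by (auto simp: card_insert_if split: if_splits)
    have jn: "pt n e (m + 1) \<in> {1..n}" using pt_in[OF ein] nm by auto
    have g1: "1 \<le> gamma_gr (R (pt n e (m + 1)))" using gamma_pos gr jn by blast
    have vJ: "valI R m ?J = int (gamma_gr (R e)) + int (gamma_gr (R (pt n e (m + 1)))) - 2 * int (m + 1)"
      unfolding valI_def using ne by simp
    have le: "valI R m ?J \<le> ?M" using V_le[OF J] .
    have "len + 1 + 2 * m \<le> gamma_gr (R e) + n" using mc pb e by simp
    then have "int (len + 1 + 2 * m) \<le> int (gamma_gr (R e) + n)" by (simp only: of_nat_le_iff)
    then have i1: "int len + 1 + 2 * int m \<le> int (gamma_gr (R e)) + int n" by simp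
    have i2: "1 \<le> int (gamma_gr (R (pt n e (m + 1))))" using g1 by simp
    have "int len \<le> valI R m ?J + int n" using vJ i1 i2 by simp
    then show ?thesis using le by linarith
  qed
qed

theorem theorem2:
  fixes n m :: nat and R :: "nat \<Rightarrow> 'a sgraph"
  assumes "1 \<le> m" and "2 * (m + 1) \<le> n"
    and "\<forall>i \<in> {1..n}. graph (R i)"
  shows "int (gamma_gr (xjoin (cycle_pow n m) R))
           = Max {(\<Sum>i\<in>I. int (gamma_gr (R i))) - int (card I) * int (m + 1) | I. I \<in> I2 n m} + int n
     \<and> (\<forall>Ss Istar c.
           (\<forall>i \<in> {1..n}. grundy_dom_seq (R i) (Ss i)) \<and>
           Istar \<in> I2 n m \<and>
           (\<Sum>i\<in>Istar. int (gamma_gr (R i))) - int (card Istar) * int (m + 1)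
             = Max {(\<Sum>i\<in>I. int (gamma_gr (R i))) - int (card I) * int (m + 1) | I. I \<in> I2 n m} \<and>
           (\<forall>j \<in> {1..n}. c j \<in> verts (R j))
         \<longrightarrow> grundy_dom_seq (xjoin (cycle_pow n m) R) (expand_seq Istar Ss c (S_C n m Istar)))"
proof -
  note m1 = assms(1) and nm = assms(2) and gr = assms(3)
  let ?H = "xjoin (cycle_pow n m) R"
  let ?V = "{valI R m I | I. I \<in> I2 n m}"
  let ?M = "Max ?V"
  have Veq: "{(\<Sum>i\<in>I. int (gamma_gr (R i))) - int (card I) * int (m + 1) | I. I \<in> I2 n m} = ?V"
    unfolding valI_def ..
  have finH: "finite (verts ?H)"
    unfolding verts_H using grR[OF gr] by (intro finite_SigmaI) auto
  have n1: "1 \<in> {1..n}" using nm by auto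
  have Vne: "?V \<noteq> {}" using I2_pair[OF m1 nm n1] by auto
  obtain Im where Im: "Im \<in> I2 n m" "valI R m Im = ?M"
    using Max_in[OF V_fin Vne] by auto
  have Isub: "\<And>I. I \<in> I2 n m \<Longrightarrow> I \<subseteq> {1..n}" unfolding I2_def indep_set_def by auto
  have constr: "\<And>I seqs c. I \<in> I2 n m \<Longrightarrow> (\<forall>j\<in>I. legal_dom_seq (R j) (seqs j) \<and> length (seqs j) = gamma_gr (R j))
      \<Longrightarrow> (\<forall>j\<in>{1..n}. c j \<in> verts (R j)) \<Longrightarrow>
      legal_dom_seq ?H (expand_seq I seqs c (S_C n m I)) \<and>
      int (length (expand_seq I seqs c (S_C n m I))) = valI R m I + int n"
  proof -
    fix I seqs c assume I: "I \<in> I2 n m" and sq: "\<forall>j\<in>I. legal_dom_seq (R j) (seqs j) \<and> length (seqs j) = gamma_gr (R j)"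
      and cv: "\<forall>j\<in>{1..n}. c j \<in> verts (R j)"
    have sq1: "\<forall>j\<in>I. legal_dom_seq (R j) (seqs j)" using sq by auto
    note ex = expand_SC[OF m1 nm I gr sq1 cv]
    have "(\<Sum>j\<in>I. length (seqs j)) = (\<Sum>j\<in>I. gamma_gr (R j))" using sq by simp
    then have "int (length (expand_seq I seqs c (S_C n m I))) + int ((m + 1) * card I) = int (\<Sum>j\<in>I. gamma_gr (R j)) + int n"
      using ex(2) by (metis of_nat_add)
    then have "int (length (expand_seq I seqs c (S_C n m I))) = valI R m I + int n"
      unfolding valI_def by (simp add: algebra_simps)
    then show "legal_dom_seq ?H (expand_seq I seqs c (S_C n m I)) \<and>
      int (length (expand_seq I seqs c (S_C n m I))) = valI R m I + int n" using ex(1) by simp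
  qed
  define gs where "gs = (\<lambda>j. SOME T. legal_dom_seq (R j) T \<and> length T = gamma_gr (R j))"
  have gs: "\<forall>j\<in>Im. legal_dom_seq (R j) (gs j) \<and> length (gs j) = gamma_gr (R j)"
  proof
    fix j assume "j \<in> Im"
    then have "j \<in> {1..n}" using Isub[OF Im(1)] by blast
    then have "finite (verts (R j))" using grR[OF gr] by blast
    from someI_ex[OF gamma_attained[OF this]] show "legal_dom_seq (R j) (gs j) \<and> length (gs j) = gamma_gr (R j)"
      unfolding gs_def .
  qed
  define c0 where "c0 = (\<lambda>j. SOME y. y \<in> verts (R j))"
  have c0: "\<forall>j\<in>{1..n}. c0 j \<in> verts (R j)"
  proof
    fix j assume "j \<in> {1..n}"
    then obtain y where "y \<in> verts (R j)" using grR[OF gr] by blast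
    then show "c0 j \<in> verts (R j)" unfolding c0_def by (rule someI)
  qed
  obtain T where T: "legal_dom_seq ?H T" "int (length T) = ?M + int n"
    using constr[OF Im(1) gs c0] Im(2) by auto
  have ge: "?M + int n \<le> int (gamma_gr ?H)" using gamma_ge[OF finH T(1)] T(2) by linarith
  obtain S where S: "legal_dom_seq ?H S" "length S = gamma_gr ?H" using gamma_attained[OF finH] by blast
  have le: "int (gamma_gr ?H) \<le> ?M + int n" using upper[OF m1 nm gr S(1)] S(2) by simp
  have part1: "int (gamma_gr ?H) = ?M + int n" using ge le by linarith
  have part2: "\<forall>Ss Istar c.
           (\<forall>i \<in> {1..n}. grundy_dom_seq (R i) (Ss i)) \<and>
           Istar \<in> I2 n m \<and> valI R m Istar = ?M \<and>
           (\<forall>j \<in> {1..n}. c j \<in> verts (R j))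
         \<longrightarrow> grundy_dom_seq ?H (expand_seq Istar Ss c (S_C n m Istar))"
  proof (intro allI impI)
    fix Ss Istar c
    assume h: "(\<forall>i \<in> {1..n}. grundy_dom_seq (R i) (Ss i)) \<and> Istar \<in> I2 n m \<and> valI R m Istar = ?M \<and>
           (\<forall>j \<in> {1..n}. c j \<in> verts (R j))"
    have Ist: "Istar \<in> I2 n m" using h by auto
    have sq: "\<forall>j\<in>Istar. legal_dom_seq (R j) (Ss j) \<and> length (Ss j) = gamma_gr (R j)"
    proof
      fix j assume "j \<in> Istar"
      then have j: "j \<in> {1..n}" using Isub[OF Ist] by blast
      then have g: "grundy_dom_seq (R j) (Ss j)" using h by auto
      have "finite (verts (R j))" using grR[OF gr j] by blast
      then show "legal_dom_seq (R j) (Ss j) \<and> length (Ss j) = gamma_gr (R j)"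
        using g grundy_length[of "R j" "Ss j"] unfolding grundy_dom_seq_def by auto
    qed
    have cv: "\<forall>j\<in>{1..n}. c j \<in> verts (R j)" using h by auto
    let ?T = "expand_seq Istar Ss c (S_C n m Istar)"
    have T: "legal_dom_seq ?H ?T" "int (length ?T) = valI R m Istar + int n" using constr[OF Ist sq cv] by auto
    have lenT: "length ?T = gamma_gr ?H" using T(2) h part1 by linarith
    show "grundy_dom_seq ?H ?T"
      unfolding grundy_dom_seq_def using T(1) lenT gamma_ge[OF finH] by auto
  qed
  show ?thesis unfolding Veq using part1 part2 unfolding valI_def by simp
qed


end
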